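(* Let $D$ be a bounded domain of $\mathbb{C}^n$ and let $V$ be a closed complex submanifold of $D$ biholomorphic to the unit disc $\Delta$. The following are equivalent: (i) $V$ is the image of a holomorphic retraction $\rho:D\to D$ (holomorphic with $\rho\circ\rho=\rho$); (ii) $V$ is the image of a complex geodesic $\varphi:\Delta\to D$; (iii) $c_D(x,y)=c_V(x,y)$ for all $x,y\in V$; (iv) there exist two distinct points $x,y\in V$ with $c_D(x,y)=c_V(x,y)$; (v) $E_D(x,v)=E_V(x,v)$ for all $x\in V$ and $v\in T_x(V)$; (vi) there exist $x\in V$ and $v\in T_x(V)$, $v\neq0$, with $E_D(x,v)=E_V(x,v)$.
   Context: $\Delta$ is the open unit disc of $\mathbb{C}$, $\omega(z,w)=\operatorname{artanh}\left|\frac{z-w}{1-\bar w z}\right|$ the Poincaré distance and $\alpha(z,v)=|v|/(1-|z|^2)$ the Poincaré metric. For a complex manifold $M$ (here $D$ or $V$) the Carathéodory pseudodistance is $c_M(z,w)=\sup\{\omega(g(z),g(w))\mid g:M\to\Delta\text{ holomorphic}\}$ and the Carathéodory (Reiffen) pseudometric is $E_M(z,v)=\sup\{\alpha(g(z),g'(z)v)\mid g:M\to\Delta\text{ holomorphic}\}$ for $v\in T_z(M)$. A complex geodesic of $D$ is a holomorphic $\varphi:\Delta\to D$ with $c_D(\varphi(\zeta),\varphi(\eta))=\omega(\zeta,\eta)$ for all $\zeta,\eta\in\Delta$. *)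

theory Defs
  imports "HOL-Analysis.Analysis"
begin

definition poincare_dist :: "complex \<Rightarrow> complex \<Rightarrow> real" where
  "poincare_dist z w = artanh (cmod ((z - w) / (1 - cnj w * z)))"

definition poincare_metric :: "complex \<Rightarrow> complex \<Rightarrow> real" where
  "poincare_metric z v = cmod v / (1 - (cmod z)\<^sup>2)"

definition holo_fun :: "(complex^'n) set \<Rightarrow> (complex^'n \<Rightarrow> complex) \<Rightarrow> bool" where
  "holo_fun D f \<longleftrightarrow> (\<forall>z\<in>D. \<exists>L. (f has_derivative L) (at z) \<and>
                       (\<forall>c x. L (c *s x) = c * L x))"

definition holo_map :: "(complex^'n) set \<Rightarrow> (complex^'n \<Rightarrow> complex^'m) \<Rightarrow> bool" where
  "holo_map D F \<longleftrightarrow> (\<forall>i. holo_fun D (\<lambda>z. F z $ i))"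

definition holo_disc_map :: "(complex \<Rightarrow> complex^'n) \<Rightarrow> bool" where
  "holo_disc_map \<phi> \<longleftrightarrow> (\<forall>i. (\<lambda>\<zeta>. \<phi> \<zeta> $ i) holomorphic_on ball 0 1)"

definition disc_map_deriv :: "(complex \<Rightarrow> complex^'n) \<Rightarrow> complex \<Rightarrow> complex^'n" where
  "disc_map_deriv \<phi> \<zeta> = (\<chi> i. deriv (\<lambda>t. \<phi> t $ i) \<zeta>)"

definition bounded_domain :: "(complex^'n) set \<Rightarrow> bool" where
  "bounded_domain D \<longleftrightarrow> open D \<and> connected D \<and> D \<noteq> {} \<and> bounded D"

text \<open>V is a closed complex submanifold of D biholomorphic to the disc, with
  psi : Delta -> V a biholomorphism, i.e. a holomorphic embedding (injective immersion,
  homeomorphism onto its image) of the disc into C^n with image V.\<close>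

definition disc_submanifold ::
  "(complex^'n) set \<Rightarrow> (complex^'n) set \<Rightarrow> (complex \<Rightarrow> complex^'n) \<Rightarrow> bool" where
  "disc_submanifold D V \<psi> \<longleftrightarrow>
     V \<subseteq> D \<and> closedin (top_of_set D) V \<and>
     holo_disc_map \<psi> \<and> \<psi> ` ball 0 1 = V \<and> inj_on \<psi> (ball 0 1) \<and>
     (\<forall>\<zeta>\<in>ball 0 1. disc_map_deriv \<psi> \<zeta> \<noteq> 0) \<and>
     (\<exists>\<psi>'. homeomorphism (ball 0 1) V \<psi> \<psi>')"

text \<open>Holomorphic functions V -> Delta (V with the complex structure given by psi).\<close>

definition holo_V_to_disc :: "(complex \<Rightarrow> complex^'n) \<Rightarrow> (complex^'n \<Rightarrow> complex) \<Rightarrow> bool" where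
  "holo_V_to_disc \<psi> g \<longleftrightarrow> g ` (\<psi> ` ball 0 1) \<subseteq> ball 0 1 \<and> (g \<circ> \<psi>) holomorphic_on ball 0 1"

definition holo_D_to_disc :: "(complex^'n) set \<Rightarrow> (complex^'n \<Rightarrow> complex) \<Rightarrow> bool" where
  "holo_D_to_disc D g \<longleftrightarrow> holo_fun D g \<and> g ` D \<subseteq> ball 0 1"

definition cara_dist_D :: "(complex^'n) set \<Rightarrow> complex^'n \<Rightarrow> complex^'n \<Rightarrow> real" where
  "cara_dist_D D z w = Sup {poincare_dist (g z) (g w) | g. holo_D_to_disc D g}"

definition cara_metric_D :: "(complex^'n) set \<Rightarrow> complex^'n \<Rightarrow> complex^'n \<Rightarrow> real" where
  "cara_metric_D D z v =
     Sup {poincare_metric (g z) (frechet_derivative g (at z) v) | g. holo_D_to_disc D g}"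

definition cara_dist_V :: "(complex \<Rightarrow> complex^'n) \<Rightarrow> complex^'n \<Rightarrow> complex^'n \<Rightarrow> real" where
  "cara_dist_V \<psi> z w = Sup {poincare_dist (g z) (g w) | g. holo_V_to_disc \<psi> g}"

text \<open>Tangent space of V = psi(Delta) at x, and the Caratheodory metric of V:
  for v = c * psi'(zeta) with psi(zeta) = x, dg_x(v) = c * (g o psi)'(zeta).\<close>

definition tangent_V :: "(complex \<Rightarrow> complex^'n) \<Rightarrow> complex^'n \<Rightarrow> (complex^'n) set" where
  "tangent_V \<psi> x = {c *s disc_map_deriv \<psi> \<zeta> | c \<zeta>. \<zeta> \<in> ball 0 1 \<and> \<psi> \<zeta> = x}"

definition cara_metric_V :: "(complex \<Rightarrow> complex^'n) \<Rightarrow> complex^'n \<Rightarrow> complex^'n \<Rightarrow> real" where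
  "cara_metric_V \<psi> x v =
     Sup {poincare_metric (g x) (c * deriv (g \<circ> \<psi>) \<zeta>) | g c \<zeta>.
            holo_V_to_disc \<psi> g \<and> \<zeta> \<in> ball 0 1 \<and> \<psi> \<zeta> = x \<and> v = c *s disc_map_deriv \<psi> \<zeta>}"

definition complex_geodesic :: "(complex^'n) set \<Rightarrow> (complex \<Rightarrow> complex^'n) \<Rightarrow> bool" where
  "complex_geodesic D \<phi> \<longleftrightarrow> holo_disc_map \<phi> \<and> \<phi> ` ball 0 1 \<subseteq> D \<and>
     (\<forall>\<zeta>\<in>ball 0 1. \<forall>\<eta>\<in>ball 0 1. cara_dist_D D (\<phi> \<zeta>) (\<phi> \<eta>) = poincare_dist \<zeta> \<eta>)"

definition holo_retraction :: "(complex^'n) set \<Rightarrow> (complex^'n \<Rightarrow> complex^'n) \<Rightarrow> bool" where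
  "holo_retraction D \<rho> \<longleftrightarrow> holo_map D \<rho> \<and> \<rho> ` D \<subseteq> D \<and> (\<forall>z\<in>D. \<rho> (\<rho> z) = \<rho> z)"

end

theory Submission
  imports Defs "HOL-Complex_Analysis.Complex_Analysis"
begin


lemma vec_has_derivative:
  fixes f :: "'a::real_normed_vector \<Rightarrow> 'b::real_normed_vector^'n"
  assumes "\<And>i. ((\<lambda>x. f x $ i) has_derivative (\<lambda>h. f' h $ i)) F" "bounded_linear f'"
  shows "(f has_derivative f') F"
  using assms unfolding has_derivative_def
  by (auto intro!: vec_tendstoI)

lemma bl_smult: "bounded_linear (\<lambda>c::complex. c *s (v::complex^'n))"
  apply (rule linear_conv_bounded_linear[THEN iffD1])
  apply (rule linearI)
  apply (auto simp: vec_eq_iff algebra_simps)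
  done

lemma holo_fun_D:
  assumes "holo_fun D g" "z \<in> D"
  shows "(g has_derivative frechet_derivative g (at z)) (at z)"
    and "frechet_derivative g (at z) (c *s x) = c * frechet_derivative g (at z) x"
proof -
  obtain L where L: "(g has_derivative L) (at z)" "\<And>c x. L (c *s x) = c * L x"
    using assms unfolding holo_fun_def by blast
  have "L = frechet_derivative g (at z)" using L(1) by (rule frechet_derivative_at)
  then show "(g has_derivative frechet_derivative g (at z)) (at z)"
     "frechet_derivative g (at z) (c *s x) = c * frechet_derivative g (at z) x"
    using L by auto
qed

lemma holo_fun_line:
  assumes "holo_fun D g" "w + t *s h \<in> D"
  shows "((\<lambda>s. g (w + s *s h)) has_field_derivative frechet_derivative g (at (w + t *s h)) h) (at t)"
proof -
  have d1: "((\<lambda>s. w + s *s h) has_derivative (\<lambda>s. s *s h)) (at t)"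
    using has_derivative_add[OF has_derivative_const bounded_linear_imp_has_derivative[OF bl_smult, of h]]
    by simp
  note d2 = holo_fun_D[OF assms]
  have "((g \<circ> (\<lambda>s. w + s *s h)) has_derivative (frechet_derivative g (at (w + t *s h)) \<circ> (\<lambda>s. s *s h))) (at t)"
    by (rule diff_chain_at[OF d1 d2(1)])
  moreover have "(frechet_derivative g (at (w + t *s h)) \<circ> (\<lambda>s. s *s h)) = (*) (frechet_derivative g (at (w + t *s h)) h)"
    using d2(2) by (auto simp: fun_eq_iff mult.commute)
  ultimately show ?thesis unfolding has_field_derivative_def by (simp add: o_def)
qed

lemma holo_fun_cont: "holo_fun D g \<Longrightarrow> continuous_on D g"
  by (meson continuous_at_imp_continuous_on has_derivative_continuous holo_fun_D(1))

lemma holo_fun_const: "holo_fun D (\<lambda>z. c)"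
  unfolding holo_fun_def by (auto intro!: exI[of _ "\<lambda>_. 0"])

lemma disc_map_has_derivative:
  assumes "holo_disc_map \<psi>" "\<zeta> \<in> ball 0 1"
  shows "(\<psi> has_derivative (\<lambda>t. t *s disc_map_deriv \<psi> \<zeta>)) (at \<zeta>)"
proof (rule vec_has_derivative)
  fix i
  have "((\<lambda>x. \<psi> x $ i) has_field_derivative deriv (\<lambda>t. \<psi> t $ i) \<zeta>) (at \<zeta>)"
    using assms unfolding holo_disc_map_def by (intro holomorphic_derivI) auto
  then show "((\<lambda>x. \<psi> x $ i) has_derivative (\<lambda>h. (h *s disc_map_deriv \<psi> \<zeta>) $ i)) (at \<zeta>)"
    unfolding has_field_derivative_def disc_map_deriv_def by (simp add: mult.commute[of _ "deriv _ _"])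
qed (rule bl_smult)

lemma holo_fun_comp_disc:
  assumes "holo_fun D g" "holo_disc_map \<psi>" "\<psi> ` ball 0 1 \<subseteq> D" "\<zeta> \<in> ball 0 1"
  shows "((g \<circ> \<psi>) has_field_derivative frechet_derivative g (at (\<psi> \<zeta>)) (disc_map_deriv \<psi> \<zeta>)) (at \<zeta>)"
proof -
  have z: "\<psi> \<zeta> \<in> D" using assms by auto
  have "((g \<circ> \<psi>) has_derivative (frechet_derivative g (at (\<psi> \<zeta>)) \<circ> (\<lambda>t. t *s disc_map_deriv \<psi> \<zeta>))) (at \<zeta>)"
    by (rule diff_chain_at[OF disc_map_has_derivative[OF assms(2,4)] holo_fun_D(1)[OF assms(1) z]])
  moreover have "(frechet_derivative g (at (\<psi> \<zeta>)) \<circ> (\<lambda>t. t *s disc_map_deriv \<psi> \<zeta>)) = (*) (frechet_derivative g (at (\<psi> \<zeta>)) (disc_map_deriv \<psi> \<zeta>))"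
    using holo_fun_D(2)[OF assms(1) z] by (auto simp: fun_eq_iff mult.commute)
  ultimately show ?thesis unfolding has_field_derivative_def by simp
qed

lemma holo_fun_comp_disc_hol:
  assumes "holo_fun D g" "holo_disc_map \<psi>" "\<psi> ` ball 0 1 \<subseteq> D"
  shows "(g \<circ> \<psi>) holomorphic_on ball 0 1"
  using holo_fun_comp_disc[OF assms] by (auto simp: holomorphic_on_open field_differentiable_def) blast

lemma holo_fun_comp_hol:
  assumes "holo_fun D g" "g ` D \<subseteq> S" "open S" "m holomorphic_on S" "z \<in> D"
  shows "((m \<circ> g) has_derivative (\<lambda>h. deriv m (g z) * frechet_derivative g (at z) h)) (at z)"
proof -
  have "(m has_field_derivative deriv m (g z)) (at (g z))"
    using assms by (intro holomorphic_derivI) auto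
  then have "((m \<circ> g) has_derivative ((*) (deriv m (g z)) \<circ> frechet_derivative g (at z))) (at z)"
    unfolding has_field_derivative_def by (intro diff_chain_at holo_fun_D(1)[OF assms(1,5)])
  then show ?thesis by (simp add: o_def)
qed

lemma holo_fun_comp:
  assumes "holo_fun D g" "g ` D \<subseteq> S" "open S" "m holomorphic_on S"
  shows "holo_fun D (m \<circ> g)"
  unfolding holo_fun_def
proof
  fix z assume z: "z \<in> D"
  show "\<exists>L. ((m \<circ> g) has_derivative L) (at z) \<and> (\<forall>c x. L (c *s x) = c * L x)"
    using holo_fun_comp_hol[OF assms z] holo_fun_D(2)[OF assms(1) z]
    by (intro exI[of _ "\<lambda>h. deriv m (g z) * frechet_derivative g (at z) h"]) auto
qed

lemma holo_fun_comp_frechet: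
  assumes "holo_fun D g" "g ` D \<subseteq> S" "open S" "m holomorphic_on S" "z \<in> D"
  shows "frechet_derivative (m \<circ> g) (at z) h = deriv m (g z) * frechet_derivative g (at z) h"
  using frechet_derivative_at[OF holo_fun_comp_hol[OF assms]] by metis


abbreviation Mb :: "complex \<Rightarrow> complex \<Rightarrow> complex" where "Mb w \<equiv> Moebius_function 0 w"

lemma Mb_simp: "Mb w z = (z - w) / (1 - cnj w * z)"
  by (simp add: Moebius_function_simple)

lemma Mb_norm: "norm w < 1 \<Longrightarrow> norm z < 1 \<Longrightarrow> norm (Mb w z) < 1"
  by (rule Moebius_function_norm_lt_1)

lemma Mb_inv1: "norm w < 1 \<Longrightarrow> norm z < 1 \<Longrightarrow> Mb (-w) (Mb w z) = z"
  by (rule Moebius_function_compose) auto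

lemma Mb_inv2: "norm w < 1 \<Longrightarrow> norm z < 1 \<Longrightarrow> Mb w (Mb (-w) z) = z"
  by (rule Moebius_function_compose) auto

lemma Mb_hol: "norm w < 1 \<Longrightarrow> Mb w holomorphic_on ball 0 1"
  by (rule Moebius_function_holomorphic)

lemma Mb_zero: "Mb w w = 0" by (rule Moebius_function_eq_zero)

lemma denom_nz: "norm w < 1 \<Longrightarrow> norm z < 1 \<Longrightarrow> 1 - cnj w * z \<noteq> 0"
proof
  assume "norm w < 1" "norm z < 1" "1 - cnj w * z = 0"
  then have "norm (cnj w * z) = 1" by (metis eq_iff_diff_eq_0 norm_one)
  moreover have "norm (cnj w * z) < 1" using \<open>norm w < 1\<close> \<open>norm z < 1\<close>
    by (simp add: norm_mult) (metis mult_strict_mono' norm_ge_zero mult_1 less_le_trans mult_le_one less_imp_le)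
  ultimately show False by simp
qed

lemma Mb_deriv:
  assumes "norm w < 1" "norm z < 1"
  shows "(Mb w has_field_derivative (1 - cnj w * w) / (1 - cnj w * z)^2) (at z)"
proof -
  have nz: "1 - cnj w * z \<noteq> 0" using denom_nz assms by blast
  have num:  "(1 - 0) * (1 - cnj w * z) - (z - w) * (0 - (0 * z + 1 * cnj w)) = 1 - cnj w * w"
      by (simp add: algebra_simps)
  show ?thesis unfolding Moebius_function_simple
    apply (rule derivative_eq_intros refl | simp add: nz)+
    using num nz by (auto simp: power2_eq_square)
qed

lemma Mb_eq0_iff: "norm w < 1 \<Longrightarrow> norm z < 1 \<Longrightarrow> Mb w z = 0 \<longleftrightarrow> z = w"
  using denom_nz by (auto simp: Mb_simp)

lemma cnj_mult_self: "cnj w * w = complex_of_real ((cmod w)^2)"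
  using complex_norm_square[of w] by (simp add: mult.commute)

lemma pd_Mb: "poincare_dist z w = artanh (cmod (Mb w z))"
  by (simp add: poincare_dist_def Mb_simp)

lemma norm_Mb_sym: "cmod (Mb w z) = cmod (Mb z w)"
proof -
  have "cmod (1 - cnj w * z) = cmod (cnj (1 - cnj w * z))" by (rule complex_mod_cnj[symmetric])
  also have "\<dots> = cmod (1 - cnj z * w)" by (simp add: mult.commute)
  finally show ?thesis by (simp add: Mb_simp norm_divide norm_minus_commute)
qed

lemma pd_sym: "poincare_dist z w = poincare_dist w z"
  by (simp add: pd_Mb norm_Mb_sym)

lemma artanh_less:
  fixes x y :: real
  assumes "-1 < x" "x < y" "y < 1"
  shows "artanh x < artanh y"
proof -
  have "(1 + x) / (1 - x) < (1 + y) / (1 - y)"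
    using assms by (simp add: field_simps)
  moreover have "0 < (1 + x) / (1 - x)" using assms by simp
  ultimately have "ln ((1 + x) / (1 - x)) < ln ((1 + y) / (1 - y))" by simp
  then show ?thesis by (simp add: artanh_def)
qed

lemma artanh_le_iff:
  fixes x y :: real
  assumes "-1 < x" "x < 1" "-1 < y" "y < 1"
  shows "artanh x \<le> artanh y \<longleftrightarrow> x \<le> y"
  using artanh_less assms by (metis linorder_not_le order_less_imp_le order.strict_iff_order)

lemma artanh_nonneg: "0 \<le> x \<Longrightarrow> x < 1 \<Longrightarrow> 0 \<le> artanh (x::real)"
  using artanh_le_iff[of 0 x] by simp

locale sp =
  fixes f :: "complex \<Rightarrow> complex" and a :: complex
  assumes hol: "f holomorphic_on ball 0 1" and into: "f ` ball 0 1 \<subseteq> ball 0 1"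
    and a: "norm a < 1"
begin

definition F where "F = (\<lambda>z. Mb (f a) (f (Mb (-a) z)))"

lemma fin: "norm z < 1 \<Longrightarrow> norm (f z) < 1" using into by (meson image_subset_iff mem_ball_0)
lemma fa: "norm (f a) < 1" using fin a by blast

lemma F_hol: "F holomorphic_on ball 0 1"
proof -
  have "(Mb (f a) \<circ> (f \<circ> Mb (-a))) holomorphic_on ball 0 1"
  proof (rule holomorphic_on_compose)
    show "(f \<circ> Mb (-a)) holomorphic_on ball 0 1"
      by (rule holomorphic_on_compose_gen[OF Mb_hol hol]) (use a Mb_norm in auto)
    show "Mb (f a) holomorphic_on (f \<circ> Mb (-a)) ` ball 0 1"
      by (rule holomorphic_on_subset[OF Mb_hol[OF fa]]) (use a in \<open>auto intro!: fin Mb_norm\<close>)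
  qed
  then show ?thesis by (simp add: F_def o_def)
qed

lemma F_0: "F 0 = 0"
  by (simp add: F_def Moebius_function_of_zero Mb_zero)

lemma F_in: "norm z < 1 \<Longrightarrow> norm (F z) < 1"
  unfolding F_def using a fa fin Mb_norm by (metis norm_minus_cancel)

lemma F_Mb: "norm z < 1 \<Longrightarrow> F (Mb a z) = Mb (f a) (f z)"
  by (simp add: F_def Mb_inv1 a)

lemma dist_le: "norm b < 1 \<Longrightarrow> poincare_dist (f b) (f a) \<le> poincare_dist b a"
proof -
  assume b: "norm b < 1"
  have xi: "norm (Mb a b) < 1" using Mb_norm a b by blast
  have "norm (F (Mb a b)) \<le> norm (Mb a b)"
    using Schwarz_Lemma(1)[OF F_hol F_0 F_in xi] .
  then have "norm (Mb (f a) (f b)) \<le> norm (Mb a b)" using F_Mb b by simp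
  moreover have "norm (Mb (f a) (f b)) < 1" using fa b fin Mb_norm by auto
  ultimately show ?thesis unfolding pd_Mb using artanh_le_iff xi
    by (smt (verit) norm_ge_zero)
qed

lemma inverse_exists:
  assumes "\<exists>\<alpha>. (\<forall>z. norm z < 1 \<longrightarrow> F z = \<alpha> * z) \<and> norm \<alpha> = 1"
  shows "\<exists>h. h holomorphic_on ball 0 1 \<and> h ` ball 0 1 \<subseteq> ball 0 1 \<and> (\<forall>\<zeta>\<in>ball 0 1. h (f \<zeta>) = \<zeta>)"
proof -
  obtain \<alpha> where al: "\<And>z. norm z < 1 \<Longrightarrow> F z = \<alpha> * z" "norm \<alpha> = 1" using assms by blast
  define h where "h = (\<lambda>w. Mb (-a) (cnj \<alpha> * Mb (f a) w))"
  have in1: "norm (cnj \<alpha> * Mb (f a) w) < 1" if "norm w < 1" for w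
    using Mb_norm[OF fa that] al(2) by (simp add: norm_mult)
  have "h holomorphic_on ball 0 1"
    unfolding h_def
    apply (rule holomorphic_on_compose_gen[where g="Mb (-a)" and t="ball 0 1", unfolded o_def])
    apply (intro holomorphic_intros Mb_hol[OF fa])
    using in1 a by (auto intro!: Mb_hol)
  moreover have "h ` ball 0 1 \<subseteq> ball 0 1"
    unfolding h_def using in1 a Mb_norm by (auto simp del: norm_minus_cancel) (metis norm_minus_cancel)
  moreover have "h (f \<zeta>) = \<zeta>" if "\<zeta> \<in> ball 0 1" for \<zeta>
  proof -
    have z: "norm \<zeta> < 1" using that by simp
    have "Mb (f a) (f \<zeta>) = \<alpha> * Mb a \<zeta>" using F_Mb[OF z] al(1) Mb_norm[OF a z] by metis
    moreover have "cnj \<alpha> * \<alpha> = 1" using al(2) by (simp add: cnj_mult_self)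
    ultimately have "cnj \<alpha> * Mb (f a) (f \<zeta>) = Mb a \<zeta>" by (metis mult.assoc mult_1)
    then show ?thesis unfolding h_def using Mb_inv1[OF a z] by simp
  qed
  ultimately show ?thesis by blast
qed

lemma dist_rigid:
  assumes b: "norm b < 1" "b \<noteq> a" and ge: "poincare_dist b a \<le> poincare_dist (f b) (f a)"
  shows "\<exists>h. h holomorphic_on ball 0 1 \<and> h ` ball 0 1 \<subseteq> ball 0 1 \<and> (\<forall>\<zeta>\<in>ball 0 1. h (f \<zeta>) = \<zeta>)"
proof (rule inverse_exists)
  have xi: "norm (Mb a b) < 1" using Mb_norm a b by blast
  have "norm (Mb (f a) (f b)) < 1" using fa b fin Mb_norm by auto
  then have "norm (Mb a b) \<le> norm (Mb (f a) (f b))" using ge unfolding pd_Mb using artanh_le_iff xi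
    by (smt (verit) norm_ge_zero)
  moreover have "norm (F (Mb a b)) \<le> norm (Mb a b)"
    using Schwarz_Lemma(1)[OF F_hol F_0 F_in xi] .
  ultimately have "norm (F (Mb a b)) = norm (Mb a b)" using F_Mb b by simp
  moreover have "Mb a b \<noteq> 0" using Mb_eq0_iff a b by blast
  ultimately show "\<exists>\<alpha>. (\<forall>z. norm z < 1 \<longrightarrow> F z = \<alpha> * z) \<and> norm \<alpha> = 1"
    using Schwarz_Lemma(3)[OF F_hol F_0 F_in xi] xi by blast
qed

lemma F_deriv: "deriv F 0 = deriv f a * (1 - (cmod a)^2) / (1 - (cmod (f a))^2)"
proof -
  have d1: "(Mb (-a) has_field_derivative (1 - (cmod a)^2)) (at 0)"
    using Mb_deriv[of "-a" 0] a by (simp add: cnj_mult_self)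
  have m0: "Mb (-a) 0 = a" by (simp add: Moebius_function_of_zero)
  have d2: "(f has_field_derivative deriv f a) (at (Mb (-a) 0))"
    unfolding m0 using hol a by (intro holomorphic_derivI) auto
  have ne: "1 - complex_of_real ((cmod (f a))\<^sup>2) \<noteq> 0"
    using fa by (metis abs_of_nonneg cnj_mult_self denom_nz norm_ge_zero)
  have d3: "(Mb (f a) has_field_derivative 1 / (1 - (cmod (f a))^2)) (at ((f \<circ> Mb (-a)) 0))"
    using Mb_deriv[OF fa fa] ne unfolding o_def m0 by (simp add: cnj_mult_self power2_eq_square)
  have "((Mb (f a) \<circ> (f \<circ> Mb (-a))) has_field_derivative
      1 / (1 - (cmod (f a))^2) * (deriv f a * (1 - (cmod a)^2))) (at 0)"
    using DERIV_chain[OF d3 DERIV_chain[OF d2 d1]] by simp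
  then have "(F has_field_derivative 1 / (1 - (cmod (f a))^2) * (deriv f a * (1 - (cmod a)^2))) (at 0)"
    by (simp add: F_def o_def)
  then show ?thesis by (simp add: DERIV_imp_deriv)
qed

lemma metric_le: "poincare_metric (f a) (c * deriv f a) \<le> cmod c / (1 - (cmod a)^2)"
proof -
  have "norm (deriv F 0) \<le> 1" using Schwarz_Lemma(2)[OF F_hol F_0 F_in, of 0] by simp
  have pa: "0 < 1 - (cmod a)^2" using a by (simp add: power_less_one_iff abs_less_iff)
  have pf: "0 < 1 - (cmod (f a))^2" using fa by (simp add: power_less_one_iff abs_less_iff)
  have e: "\<And>r::real. (1 - (complex_of_real r)^2) = complex_of_real (1 - r^2)" by simp
  have nd: "norm (deriv F 0) = norm (deriv f a) * (1 - (cmod a)^2) / (1 - (cmod (f a))^2)"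
    unfolding F_deriv e norm_mult norm_divide norm_of_real using pa pf by simp
  then have "norm (deriv f a) * (1 - (cmod a)^2) / (1 - (cmod (f a))^2) \<le> 1"
    using \<open>norm (deriv F 0) \<le> 1\<close> by simp
  then have "norm (deriv f a) / (1 - (cmod (f a))^2) \<le> 1 / (1 - (cmod a)^2)"
    using pa pf by (simp add: field_simps)
  then have "cmod c * (norm (deriv f a) / (1 - (cmod (f a))^2)) \<le> cmod c * (1 / (1 - (cmod a)^2))"
    by (rule mult_left_mono) simp
  moreover have "poincare_metric (f a) (c * deriv f a) = cmod c * (norm (deriv f a) / (1 - (cmod (f a))^2))"
    by (simp add: poincare_metric_def norm_mult)
  ultimately show ?thesis by simp
qed

lemma metric_rigid:
  assumes ge: "1 / (1 - (cmod a)^2) \<le> poincare_metric (f a) (deriv f a)"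
  shows "\<exists>h. h holomorphic_on ball 0 1 \<and> h ` ball 0 1 \<subseteq> ball 0 1 \<and> (\<forall>\<zeta>\<in>ball 0 1. h (f \<zeta>) = \<zeta>)"
proof (rule inverse_exists)
  have le1: "norm (deriv F 0) \<le> 1" using Schwarz_Lemma(2)[OF F_hol F_0 F_in, of 0] by simp
  have pa: "0 < 1 - (cmod a)^2" using a by (simp add: power_less_one_iff abs_less_iff)
  have pf: "0 < 1 - (cmod (f a))^2" using fa by (simp add: power_less_one_iff abs_less_iff)
  have e: "\<And>r::real. (1 - (complex_of_real r)^2) = complex_of_real (1 - r^2)" by simp
  have nd: "norm (deriv F 0) = norm (deriv f a) * (1 - (cmod a)^2) / (1 - (cmod (f a))^2)"
    unfolding F_deriv e norm_mult norm_divide norm_of_real using pa pf by simp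
  have "1 / (1 - (cmod a)^2) \<le> norm (deriv f a) / (1 - (cmod (f a))^2)"
    using ge unfolding poincare_metric_def .
  then have "1 \<le> norm (deriv F 0)" unfolding nd using pa pf by (simp add: field_simps)
  then have "norm (deriv F 0) = 1" using le1 by simp
  then show "\<exists>\<alpha>. (\<forall>z. norm z < 1 \<longrightarrow> F z = \<alpha> * z) \<and> norm \<alpha> = 1"
    using Schwarz_Lemma(3)[OF F_hol F_0 F_in, of 0] by simp
qed

end


lemma holo_fun_subset: "holo_fun D g \<Longrightarrow> E \<subseteq> D \<Longrightarrow> holo_fun E g"
  unfolding holo_fun_def by blast

lemma holo_map_cont: "holo_map D \<rho> \<Longrightarrow> continuous_on D \<rho>"
proof -
  assume "holo_map D \<rho>"
  then have "\<And>i. continuous_on D (\<lambda>z. \<rho> z $ i)" unfolding holo_map_def using holo_fun_cont by blast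
  then have "continuous_on D (\<lambda>z. \<chi> i. \<rho> z $ i)" by (rule continuous_on_vec_lambda)
  then show ?thesis by simp
qed

lemma holo_disc_map_cont: "holo_disc_map \<phi> \<Longrightarrow> continuous_on (ball 0 1) \<phi>"
proof -
  assume "holo_disc_map \<phi>"
  then have "\<And>i. continuous_on (ball 0 1) (\<lambda>z. \<phi> z $ i)" unfolding holo_disc_map_def
    using holomorphic_on_imp_continuous_on by blast
  then have "continuous_on (ball 0 1) (\<lambda>z. \<chi> i. \<phi> z $ i)" by (rule continuous_on_vec_lambda)
  then show ?thesis by simp
qed

locale dsm =
  fixes D V :: "(complex^'n) set" and \<psi> :: "complex \<Rightarrow> complex^'n"
  assumes bd: "bounded_domain D" and sm: "disc_submanifold D V \<psi>"
begin

definition pinv where "pinv = inv_into (ball 0 1) \<psi>"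

lemma VD: "V \<subseteq> D" using sm unfolding disc_submanifold_def by blast
lemma psi_hol: "holo_disc_map \<psi>" using sm unfolding disc_submanifold_def by blast
lemma psi_img: "\<psi> ` ball 0 1 = V" using sm unfolding disc_submanifold_def by blast
lemma psi_inj: "inj_on \<psi> (ball 0 1)" using sm unfolding disc_submanifold_def by blast
lemma psi_dnz: "\<zeta> \<in> ball 0 1 \<Longrightarrow> disc_map_deriv \<psi> \<zeta> \<noteq> 0" using sm unfolding disc_submanifold_def by blast
lemma psi_D: "\<psi> ` ball 0 1 \<subseteq> D" using VD psi_img by simp
lemma openD: "open D" using bd unfolding bounded_domain_def by blast
lemma connD: "connected D" using bd unfolding bounded_domain_def by blast

lemma pinv_psi: "\<zeta> \<in> ball 0 1 \<Longrightarrow> pinv (\<psi> \<zeta>) = \<zeta>"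
  unfolding pinv_def using psi_inj by (simp add: inv_into_f_f)
lemma psi_pinv: "x \<in> V \<Longrightarrow> \<psi> (pinv x) = x"
  unfolding pinv_def using psi_img by (simp add: f_inv_into_f)
lemma pinv_in: "x \<in> V \<Longrightarrow> pinv x \<in> ball 0 1"
  unfolding pinv_def using psi_img by (metis inv_into_into)

lemma pinv_cont: "continuous_on V pinv"
proof -
  obtain \<psi>' where h: "homeomorphism (ball 0 1) V \<psi> \<psi>'" using sm unfolding disc_submanifold_def by blast
  then have c: "continuous_on V \<psi>'" unfolding homeomorphism_def by blast
  have "\<And>x. x \<in> V \<Longrightarrow> \<psi>' x = pinv x"
    using h unfolding homeomorphism_def by (metis image_eqI pinv_psi psi_pinv pinv_in)
  then show ?thesis using continuous_on_cong c by blast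
qed

lemma locinv:
  assumes "x0 \<in> V"
  obtains i T h \<delta> where "open T" "h holomorphic_on T" "\<delta> > 0"
    "\<And>w. w \<in> V \<Longrightarrow> dist w x0 < \<delta> \<Longrightarrow> w $ i \<in> T \<and> h (w $ i) = pinv w"
proof -
  define \<zeta>0 where "\<zeta>0 = pinv x0"
  have z0: "\<zeta>0 \<in> ball 0 1" using pinv_in assms \<zeta>0_def by blast
  obtain i where dnz: "deriv (\<lambda>t. \<psi> t $ i) \<zeta>0 \<noteq> 0"
    using psi_dnz[OF z0] unfolding disc_map_deriv_def by (metis (mono_tags, lifting) vec_eq_iff vec_lambda_beta zero_index)
  have holi: "(\<lambda>t. \<psi> t $ i) holomorphic_on ball 0 1" using psi_hol unfolding holo_disc_map_def by blast
  obtain r where r: "r > 0" "ball \<zeta>0 r \<subseteq> ball 0 1" "inj_on (\<lambda>t. \<psi> t $ i) (ball \<zeta>0 r)"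
    using has_complex_derivative_locally_injective[OF holi z0 open_ball dnz] by blast
  have holr: "(\<lambda>t. \<psi> t $ i) holomorphic_on ball \<zeta>0 r" using holi r(2) holomorphic_on_subset by blast
  obtain h where h: "h holomorphic_on (\<lambda>t. \<psi> t $ i) ` ball \<zeta>0 r"
      "\<And>z. z \<in> ball \<zeta>0 r \<Longrightarrow> h (\<psi> z $ i) = z"
    using holomorphic_has_inverse[OF holr open_ball r(3)] by blast
  have T: "open ((\<lambda>t. \<psi> t $ i) ` ball \<zeta>0 r)"
    by (rule open_mapping_thm3[OF holr open_ball r(3)])
  obtain \<delta> where \<delta>: "\<delta> > 0" "\<And>w. w \<in> V \<Longrightarrow> dist w x0 < \<delta> \<Longrightarrow> dist (pinv w) \<zeta>0 < r"
    using pinv_cont assms r(1) unfolding continuous_on_iff \<zeta>0_def by blast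
  show ?thesis
  proof (rule that[OF T h(1) \<delta>(1)])
    fix w assume w: "w \<in> V" "dist w x0 < \<delta>"
    then have pw: "pinv w \<in> ball \<zeta>0 r" using \<delta>(2) by (simp add: dist_commute)
    have wi: "w $ i = \<psi> (pinv w) $ i" using psi_pinv w(1) by simp
    show "w $ i \<in> (\<lambda>t. \<psi> t $ i) ` ball \<zeta>0 r \<and> h (w $ i) = pinv w"
      unfolding wi using pw h(2) by blast
  qed
qed

lemma holo_fun_pinv:
  assumes "holo_map E \<rho>" "open E" "\<rho> ` E \<subseteq> V"
  shows "holo_fun E (\<lambda>z. pinv (\<rho> z))"
  unfolding holo_fun_def
proof
  fix z assume z: "z \<in> E"
  then have x0: "\<rho> z \<in> V" using assms by blast
  obtain T h \<delta> i where T: "open T" "h holomorphic_on T" "\<delta> > 0"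
    "\<And>w. w \<in> V \<Longrightarrow> dist w (\<rho> z) < \<delta> \<Longrightarrow> w $ i \<in> T \<and> h (w $ i) = pinv w"
    by (rule locinv[OF x0]) blast
  obtain e where e: "e > 0" "\<And>z'. z' \<in> E \<Longrightarrow> dist z' z < e \<Longrightarrow> dist (\<rho> z') (\<rho> z) < \<delta>"
    using holo_map_cont[OF assms(1)] z T(3) unfolding continuous_on_iff by blast
  obtain e' where e': "e' > 0" "ball z e' \<subseteq> E" using assms(2) z open_contains_ball by blast
  define B where "B = ball z (min e e')"
  have B: "open B" "z \<in> B" "B \<subseteq> E" using e e' by (auto simp: B_def)
  have near: "\<rho> z' \<in> V \<and> dist (\<rho> z') (\<rho> z) < \<delta>" if "z' \<in> B" for z'
  proof -
    have "z' \<in> E" "dist z' z < e" using that B(3) by (auto simp: B_def dist_commute)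
    then show ?thesis using e(2) assms(3) by blast
  qed
  have eq: "\<And>z'. z' \<in> B \<Longrightarrow> h (\<rho> z' $ i) = pinv (\<rho> z')"
    and inT: "\<And>z'. z' \<in> B \<Longrightarrow> \<rho> z' $ i \<in> T"
    using T(4) near by blast+
  have hi: "holo_fun B (\<lambda>z. \<rho> z $ i)"
    using assms(1) B(3) unfolding holo_map_def by (meson holo_fun_subset)
  have d: "((h \<circ> (\<lambda>z. \<rho> z $ i)) has_derivative (\<lambda>k. deriv h (\<rho> z $ i) * frechet_derivative (\<lambda>z. \<rho> z $ i) (at z) k)) (at z)"
    by (rule holo_fun_comp_hol[OF hi _ T(1,2) B(2)]) (use inT in auto)
  have d': "((\<lambda>z. pinv (\<rho> z)) has_derivative (\<lambda>k. deriv h (\<rho> z $ i) * frechet_derivative (\<lambda>z. \<rho> z $ i) (at z) k)) (at z)"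
    by (rule has_derivative_transform_within_open[OF d B(1,2)]) (simp add: eq)
  show "\<exists>L. ((\<lambda>z. pinv (\<rho> z)) has_derivative L) (at z) \<and> (\<forall>c x. L (c *s x) = c * L x)"
    using d' holo_fun_D(2)[OF hi B(2)] by (intro exI[of _ "(\<lambda>k. deriv h (\<rho> z $ i) * frechet_derivative (\<lambda>z. \<rho> z $ i) (at z) k)"]) auto
qed

lemma hol_pinv_disc:
  assumes "holo_disc_map \<phi>" "\<phi> ` ball 0 1 \<subseteq> V"
  shows "(\<lambda>z. pinv (\<phi> z)) holomorphic_on ball 0 1"
  unfolding holomorphic_on_open[OF open_ball]
proof
  fix z :: complex assume z: "z \<in> ball 0 1"
  then have x0: "\<phi> z \<in> V" using assms by blast
  obtain T h \<delta> i where T: "open T" "h holomorphic_on T" "\<delta> > 0"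
    "\<And>w. w \<in> V \<Longrightarrow> dist w (\<phi> z) < \<delta> \<Longrightarrow> w $ i \<in> T \<and> h (w $ i) = pinv w"
    by (rule locinv[OF x0]) blast
  obtain e where e: "e > 0" "\<And>z'. z' \<in> ball 0 1 \<Longrightarrow> dist z' z < e \<Longrightarrow> dist (\<phi> z') (\<phi> z) < \<delta>"
    using holo_disc_map_cont[OF assms(1)] z T(3) unfolding continuous_on_iff by blast
  obtain e' where e': "e' > 0" "ball z e' \<subseteq> ball 0 1" using z open_contains_ball open_ball by blast
  define B where "B = ball z (min e e')"
  have B: "open B" "z \<in> B" "B \<subseteq> ball 0 1" using e e' by (auto simp: B_def)
  have near: "\<phi> z' \<in> V \<and> dist (\<phi> z') (\<phi> z) < \<delta>" if "z' \<in> B" for z'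
  proof -
    have "z' \<in> ball 0 1" using that B(3) by blast
    moreover have "dist z' z < e" using that by (auto simp: B_def dist_commute)
    ultimately show ?thesis using e(2) assms(2) by blast
  qed
  have eq: "\<And>z'. z' \<in> B \<Longrightarrow> h (\<phi> z' $ i) = pinv (\<phi> z')"
    and inT: "\<And>z'. z' \<in> B \<Longrightarrow> \<phi> z' $ i \<in> T"
    using T(4) near by blast+
  have hi: "(\<lambda>z. \<phi> z $ i) holomorphic_on B"
    using assms(1) B(3) unfolding holo_disc_map_def by (meson holomorphic_on_subset)
  have "(h \<circ> (\<lambda>z. \<phi> z $ i)) holomorphic_on B"
    by (rule holomorphic_on_compose_gen[OF hi T(2)]) (use inT in auto)
  then have "((h \<circ> (\<lambda>z. \<phi> z $ i)) has_field_derivative deriv (h \<circ> (\<lambda>z. \<phi> z $ i)) z) (at z)"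
    using B by (intro holomorphic_derivI) auto
  then have "((\<lambda>z. pinv (\<phi> z)) has_field_derivative deriv (h \<circ> (\<lambda>z. \<phi> z $ i)) z) (at z)"
    by (rule has_field_derivative_transform_within_open[OF _ B(1,2)]) (simp add: eq)
  then show "\<exists>f'. ((\<lambda>z. pinv (\<phi> z)) has_field_derivative f') (at z)" by blast
qed

end


context dsm
begin

lemma D_to_V: "holo_D_to_disc D g \<Longrightarrow> holo_V_to_disc \<psi> g"
  unfolding holo_D_to_disc_def holo_V_to_disc_def
  using psi_img VD holo_fun_comp_disc_hol[OF _ psi_hol psi_D] by blast

lemma V_sp: "holo_V_to_disc \<psi> g \<Longrightarrow> norm a < 1 \<Longrightarrow> sp (g \<circ> \<psi>) a"
  unfolding holo_V_to_disc_def sp_def by (auto simp: image_comp)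

lemma pinv_V: "holo_V_to_disc \<psi> pinv"
proof -
  have "pinv ` (\<psi> ` ball 0 1) \<subseteq> ball 0 1" using pinv_psi by auto
  moreover have "(pinv \<circ> \<psi>) holomorphic_on ball 0 1"
    by (rule holomorphic_transform[of id]) (auto simp: pinv_psi)
  ultimately show ?thesis unfolding holo_V_to_disc_def by blast
qed

lemma deriv_pinv_psi: "\<zeta> \<in> ball 0 1 \<Longrightarrow> deriv (pinv \<circ> \<psi>) \<zeta> = 1"
proof -
  assume z: "\<zeta> \<in> ball 0 1"
  have "((\<lambda>x. x) has_field_derivative 1) (at \<zeta>)" by (rule DERIV_ident)
  then have "((pinv \<circ> \<psi>) has_field_derivative 1) (at \<zeta>)"
    by (rule has_field_derivative_transform_within_open[OF _ open_ball z]) (simp add: pinv_psi)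
  then show ?thesis by (rule DERIV_imp_deriv)
qed

lemma const_D: "holo_D_to_disc D (\<lambda>z. 0)"
  unfolding holo_D_to_disc_def using holo_fun_const by auto

lemma bdd_SD:
  assumes "a \<in> ball 0 1" "b \<in> ball 0 1"
  shows "\<forall>r \<in> {poincare_dist (g (\<psi> a)) (g (\<psi> b)) |g. holo_D_to_disc D g}. r \<le> poincare_dist a b"
proof clarify
  fix g assume g: "holo_D_to_disc D g"
  interpret sp "g \<circ> \<psi>" b using V_sp[OF D_to_V[OF g]] assms by simp
  show "poincare_dist (g (\<psi> a)) (g (\<psi> b)) \<le> poincare_dist a b"
    using dist_le[of a] assms by simp
qed

lemma cD_le:
  assumes "a \<in> ball 0 1" "b \<in> ball 0 1"
  shows "cara_dist_D D (\<psi> a) (\<psi> b) \<le> poincare_dist a b"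
  unfolding cara_dist_D_def
  by (rule cSup_least) (use bdd_SD[OF assms] const_D in auto)

lemma cD_ge:
  assumes "a \<in> ball 0 1" "b \<in> ball 0 1" "holo_D_to_disc D g"
  shows "poincare_dist (g (\<psi> a)) (g (\<psi> b)) \<le> cara_dist_D D (\<psi> a) (\<psi> b)"
  unfolding cara_dist_D_def
proof (rule cSup_upper)
  show "bdd_above {poincare_dist (g (\<psi> a)) (g (\<psi> b)) |g. holo_D_to_disc D g}"
    using bdd_SD[OF assms(1,2)] by (intro bdd_aboveI[where M="poincare_dist a b"]) blast
qed (use assms(3) in blast)

lemma cV_eq:
  assumes "a \<in> ball 0 1" "b \<in> ball 0 1"
  shows "cara_dist_V \<psi> (\<psi> a) (\<psi> b) = poincare_dist a b"
  unfolding cara_dist_V_def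
proof (rule cSup_eq_maximum)
  show "poincare_dist a b \<in> {poincare_dist (g (\<psi> a)) (g (\<psi> b)) |g. holo_V_to_disc \<psi> g}"
  proof -
    have "poincare_dist a b = poincare_dist (pinv (\<psi> a)) (pinv (\<psi> b))" using pinv_psi[OF assms(1)] pinv_psi[OF assms(2)] by simp
    then show ?thesis using pinv_V by blast
  qed
  show "\<And>x. x \<in> {poincare_dist (g (\<psi> a)) (g (\<psi> b)) |g. holo_V_to_disc \<psi> g} \<Longrightarrow> x \<le> poincare_dist a b"
  proof clarify
    fix g assume g: "holo_V_to_disc \<psi> g"
    interpret sp "g \<circ> \<psi>" b using V_sp[OF g] assms by simp
    show "poincare_dist (g (\<psi> a)) (g (\<psi> b)) \<le> poincare_dist a b"
      using dist_le[of a] assms by simp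
  qed
qed

lemma frechet_psi:
  assumes "holo_fun D g" "\<zeta> \<in> ball 0 1"
  shows "frechet_derivative g (at (\<psi> \<zeta>)) (c *s disc_map_deriv \<psi> \<zeta>) = c * deriv (g \<circ> \<psi>) \<zeta>"
proof -
  have "deriv (g \<circ> \<psi>) \<zeta> = frechet_derivative g (at (\<psi> \<zeta>)) (disc_map_deriv \<psi> \<zeta>)"
    using holo_fun_comp_disc[OF assms(1) psi_hol psi_D assms(2)] by (rule DERIV_imp_deriv)
  moreover have "\<psi> \<zeta> \<in> D" using psi_D assms by blast
  ultimately show ?thesis using holo_fun_D(2)[OF assms(1)] by auto
qed

lemma bdd_ED:
  assumes "\<zeta> \<in> ball 0 1"
  shows "\<forall>r \<in> {poincare_metric (g (\<psi> \<zeta>)) (frechet_derivative g (at (\<psi> \<zeta>)) (c *s disc_map_deriv \<psi> \<zeta>)) |g. holo_D_to_disc D g}.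
            r \<le> cmod c / (1 - (cmod \<zeta>)^2)"
proof clarify
  fix g assume g: "holo_D_to_disc D g"
  interpret sp "g \<circ> \<psi>" \<zeta> using V_sp[OF D_to_V[OF g]] assms by simp
  show "poincare_metric (g (\<psi> \<zeta>)) (frechet_derivative g (at (\<psi> \<zeta>)) (c *s disc_map_deriv \<psi> \<zeta>)) \<le> cmod c / (1 - (cmod \<zeta>)^2)"
    using metric_le[of c] frechet_psi[OF _ assms] g unfolding holo_D_to_disc_def by simp
qed

lemma ED_le:
  assumes "\<zeta> \<in> ball 0 1"
  shows "cara_metric_D D (\<psi> \<zeta>) (c *s disc_map_deriv \<psi> \<zeta>) \<le> cmod c / (1 - (cmod \<zeta>)^2)"
  unfolding cara_metric_D_def
  by (rule cSup_least) (use bdd_ED[OF assms] const_D in auto)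

lemma ED_ge:
  assumes "\<zeta> \<in> ball 0 1" "holo_D_to_disc D g"
  shows "poincare_metric (g (\<psi> \<zeta>)) (frechet_derivative g (at (\<psi> \<zeta>)) (c *s disc_map_deriv \<psi> \<zeta>)) \<le> cara_metric_D D (\<psi> \<zeta>) (c *s disc_map_deriv \<psi> \<zeta>)"
  unfolding cara_metric_D_def
proof (rule cSup_upper)
  show "bdd_above {poincare_metric (g (\<psi> \<zeta>)) (frechet_derivative g (at (\<psi> \<zeta>)) (c *s disc_map_deriv \<psi> \<zeta>)) |g. holo_D_to_disc D g}"
    using bdd_ED[OF assms(1)] by (intro bdd_aboveI[where M="cmod c / (1 - (cmod \<zeta>)^2)"]) blast
qed (use assms(2) in blast)

lemma smult_cancel:
  assumes "c *s v = c' *s (v::complex^'n)" "v \<noteq> 0"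
  shows "c = c'"
proof -
  obtain j where "v $ j \<noteq> 0" using assms(2) by (metis vec_eq_iff zero_index)
  moreover have "c * v $ j = c' * v $ j" using assms(1) by (metis vector_smult_component)
  ultimately show ?thesis by simp
qed

lemma EV_eq:
  assumes "\<zeta> \<in> ball 0 1"
  shows "cara_metric_V \<psi> (\<psi> \<zeta>) (c *s disc_map_deriv \<psi> \<zeta>) = cmod c / (1 - (cmod \<zeta>)^2)"
  unfolding cara_metric_V_def
proof (rule cSup_eq_maximum)
  show "cmod c / (1 - (cmod \<zeta>)^2) \<in> {poincare_metric (g (\<psi> \<zeta>)) (c' * deriv (g \<circ> \<psi>) \<zeta>') |g c' \<zeta>'.
        holo_V_to_disc \<psi> g \<and> \<zeta>' \<in> ball 0 1 \<and> \<psi> \<zeta>' = \<psi> \<zeta> \<and> c *s disc_map_deriv \<psi> \<zeta> = c' *s disc_map_deriv \<psi> \<zeta>'}"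
  proof -
    have "cmod c / (1 - (cmod \<zeta>)^2) = poincare_metric (pinv (\<psi> \<zeta>)) (c * deriv (pinv \<circ> \<psi>) \<zeta>)"
      using pinv_psi[OF assms] deriv_pinv_psi[OF assms] by (simp add: poincare_metric_def)
    then show ?thesis using pinv_V assms by blast
  qed
  show "\<And>x. x \<in> {poincare_metric (g (\<psi> \<zeta>)) (c' * deriv (g \<circ> \<psi>) \<zeta>') |g c' \<zeta>'.
        holo_V_to_disc \<psi> g \<and> \<zeta>' \<in> ball 0 1 \<and> \<psi> \<zeta>' = \<psi> \<zeta> \<and> c *s disc_map_deriv \<psi> \<zeta> = c' *s disc_map_deriv \<psi> \<zeta>'}
        \<Longrightarrow> x \<le> cmod c / (1 - (cmod \<zeta>)^2)"
  proof clarify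
    fix g c' \<zeta>' assume g: "holo_V_to_disc \<psi> g" and z': "\<zeta>' \<in> ball 0 1" "\<psi> \<zeta>' = \<psi> \<zeta>"
      and cc: "c *s disc_map_deriv \<psi> \<zeta> = c' *s disc_map_deriv \<psi> \<zeta>'"
    have "\<zeta>' = \<zeta>" using psi_inj z' assms by (meson inj_onD)
    then have "c' = c" using cc smult_cancel psi_dnz[OF assms] by metis
    interpret sp "g \<circ> \<psi>" \<zeta> using V_sp[OF g] assms by simp
    show "poincare_metric (g (\<psi> \<zeta>)) (c' * deriv (g \<circ> \<psi>) \<zeta>') \<le> cmod c / (1 - (cmod \<zeta>)\<^sup>2)"
      using metric_le[of c] \<open>\<zeta>' = \<zeta>\<close> \<open>c' = c\<close> by simp
  qed
qed

lemma tangent_char: "v \<in> tangent_V \<psi> (\<psi> \<zeta>) \<Longrightarrow> \<zeta> \<in> ball 0 1 \<Longrightarrow> \<exists>c. v = c *s disc_map_deriv \<psi> \<zeta>"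
  unfolding tangent_V_def using psi_inj by (auto dest: inj_onD)

end


lemma norm_smult_vec: "norm (c *s (x::complex^'n)) = cmod c * norm x"
  unfolding norm_vec_def by (simp add: L2_set_right_distrib norm_mult)

lemma frechet_zero:
  assumes "holo_fun D f" "w \<in> D"
  shows "frechet_derivative f (at w) 0 = 0"
  using holo_fun_D(2)[OF assms, of 0 0] by simp

lemma cauchy_est:
  assumes hf: "holo_fun D f" and r: "0 < r" "ball w r \<subseteq> D"
    and B: "\<And>z. z \<in> ball w r \<Longrightarrow> norm (f z) \<le> B"
  shows "norm (frechet_derivative f (at w) h) \<le> 2 * B / r * norm h"
proof (cases "h = 0")
  case True
  have "w \<in> D" using r by auto
  then show ?thesis using frechet_zero[OF hf] True by simp
next
  case False
  define u where "u = (1 / complex_of_real (norm h)) *s h"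
  have nu: "norm u = 1" using False by (simp add: u_def norm_smult_vec norm_divide)
  have hu: "h = complex_of_real (norm h) *s u" using False by (simp add: u_def vec_eq_iff)
  define \<phi> where "\<phi> = (\<lambda>t. f (w + t *s u))"
  have inb: "w + t *s u \<in> ball w r" if "t \<in> ball 0 r" for t
    using that nu by (simp add: dist_norm norm_smult_vec)
  have dphi: "(\<phi> has_field_derivative frechet_derivative f (at (w + t *s u)) u) (at t)" if "t \<in> ball 0 r" for t
    unfolding \<phi>_def by (rule holo_fun_line[OF hf]) (use inb[OF that] r in blast)
  have hol: "\<phi> holomorphic_on ball 0 r"
    using dphi by (auto simp: holomorphic_on_open field_differentiable_def) blast
  have d0: "deriv \<phi> 0 = frechet_derivative f (at w) u"
    using DERIV_imp_deriv[OF dphi[of 0]] r by simp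
  have hol2: "\<phi> holomorphic_on ball 0 (r/2)" by (rule holomorphic_on_subset[OF hol]) (use r in auto)
  have cont: "continuous_on (cball 0 (r/2)) \<phi>"
    by (rule holomorphic_on_imp_continuous_on, rule holomorphic_on_subset[OF hol]) (use r in auto)
  have "norm ((deriv ^^ 1) \<phi> 0) \<le> fact 1 * B / (r/2)^1"
  proof (rule Cauchy_inequality[OF hol2 cont])
    show "0 < r/2" using r by simp
    show "norm (0 - x) = r / 2 \<Longrightarrow> norm (\<phi> x) \<le> B" for x
      unfolding \<phi>_def by (rule B, rule inb) (use r in simp)
  qed
  then have le: "norm (frechet_derivative f (at w) u) \<le> 2 * B / r" using d0 by (simp add: mult.commute)
  have "frechet_derivative f (at w) h = complex_of_real (norm h) * frechet_derivative f (at w) u"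
  proof -
    have wD: "w \<in> D" using r by auto
    show ?thesis using holo_fun_D(2)[OF hf wD, of "complex_of_real (norm h)" u] hu by simp
  qed
  then have "norm (frechet_derivative f (at w) h) = norm h * norm (frechet_derivative f (at w) u)"
    by (simp add: norm_mult)
  also have "\<dots> \<le> norm h * (2 * B / r)" using le by (rule mult_left_mono) simp
  finally show ?thesis by (simp add: mult.commute)
qed

lemma holo_fun_diff:
  assumes "holo_fun D f" "holo_fun D g"
  shows "holo_fun D (\<lambda>z. f z - g z)"
    and "z \<in> D \<Longrightarrow> frechet_derivative (\<lambda>z. f z - g z) (at z) h = frechet_derivative f (at z) h - frechet_derivative g (at z) h"
proof -
  have d: "((\<lambda>z. f z - g z) has_derivative (\<lambda>h. frechet_derivative f (at z) h - frechet_derivative g (at z) h)) (at z)"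
    if "z \<in> D" for z
    using holo_fun_D(1)[OF assms(1) that] holo_fun_D(1)[OF assms(2) that] by (rule has_derivative_diff)
  show "holo_fun D (\<lambda>z. f z - g z)"
    unfolding holo_fun_def
  proof
    fix z assume z: "z \<in> D"
    show "\<exists>L. ((\<lambda>z. f z - g z) has_derivative L) (at z) \<and> (\<forall>c x. L (c *s x) = c * L x)"
      using d[OF z] holo_fun_D(2)[OF assms(1) z] holo_fun_D(2)[OF assms(2) z]
      by (intro exI[of _ "\<lambda>h. frechet_derivative f (at z) h - frechet_derivative g (at z) h"]) (auto simp: algebra_simps)
  qed
  show "frechet_derivative (\<lambda>z. f z - g z) (at z) h = frechet_derivative f (at z) h - frechet_derivative g (at z) h"
    if z: "z \<in> D"
  proof -
    have "(\<lambda>h. frechet_derivative f (at z) h - frechet_derivative g (at z) h) = frechet_derivative (\<lambda>z. f z - g z) (at z)"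
      by (rule frechet_derivative_at[OF d[OF z]])
    from fun_cong[OF this, of h] show ?thesis by simp
  qed
qed

lemma lipschitz_ball:
  assumes hf: "holo_fun D f" and r: "0 < r" "ball z (2*r) \<subseteq> D" and bd: "\<And>x. x \<in> D \<Longrightarrow> norm (f x) \<le> 1"
    and xy: "x \<in> ball z r" "y \<in> ball z r"
  shows "norm (f x - f y) \<le> 2 / r * norm (x - y)"
proof (rule differentiable_bound[OF convex_ball _ _ xy])
  fix v assume v: "v \<in> ball z r"
  have "ball v r \<subseteq> ball z (2*r)"
  proof
    fix x assume x: "x \<in> ball v r"
    have "dist z v < r" "dist v x < r" using v x by auto
    then have "dist z x < 2*r" using dist_triangle[of z x v] by linarith
    then show "x \<in> ball z (2*r)" by simp
  qed
  then have bv: "ball v r \<subseteq> D" using r by blast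
  have vD: "v \<in> D" using bv r(1) by auto
  show "(f has_derivative frechet_derivative f (at v)) (at v within ball z r)"
    by (rule has_derivative_at_withinI[OF holo_fun_D(1)[OF hf vD]])
  have b1: "\<And>x. x \<in> ball v r \<Longrightarrow> norm (f x) \<le> 1" using bv bd by blast
  show "onorm (frechet_derivative f (at v)) \<le> 2 / r"
  proof (rule onorm_le)
    fix h
    show "norm (frechet_derivative f (at v) h) \<le> 2 / r * norm h"
      using cauchy_est[OF hf r(1) bv b1, of h] by simp
  qed
qed


lemma montel_cn:
  fixes G :: "nat \<Rightarrow> complex^'n \<Rightarrow> complex"
  assumes D: "open D" and hol: "\<And>k. holo_fun D (G k)" and bd: "\<And>k z. z \<in> D \<Longrightarrow> norm (G k z) \<le> 1"
  obtains s g where "strict_mono s" "holo_fun D g" "\<And>z. z \<in> D \<Longrightarrow> (\<lambda>n. G (s n) z) \<longlonglongrightarrow> g z"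
    "\<And>z h. z \<in> D \<Longrightarrow> (\<lambda>n. frechet_derivative (G (s n)) (at z) h) \<longlonglongrightarrow> frechet_derivative g (at z) h"
proof -
  obtain R where R: "countable R" "R \<subseteq> D" "D \<subseteq> closure R" by (rule separable)
  have bR: "\<And>n x. x \<in> R \<Longrightarrow> norm (G n x) \<le> 1" using bd R(2) by blast
  obtain s where s: "strict_mono s" "\<And>x. x \<in> R \<Longrightarrow> \<exists>l. (\<lambda>n. G (s n) x) \<longlonglongrightarrow> l"
    using function_convergent_subsequence[of R G 1, OF R(1) bR] by blast
  define H where "H n = G (s n)" for n
  have holH: "\<And>n. holo_fun D (H n)" using hol by (simp add: H_def)
  have bdH: "\<And>n z. z \<in> D \<Longrightarrow> norm (H n z) \<le> 1" using bd by (simp add: H_def)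
  have convR: "\<And>x. x \<in> R \<Longrightarrow> convergent (\<lambda>n. H n x)" using s(2) unfolding H_def convergent_def by blast
  have UC: "\<exists>N. \<forall>m\<ge>N. \<forall>n\<ge>N. \<forall>w\<in>cball z0 r. norm (H m w - H n w) < e"
    if z0r: "0 < r" "ball z0 (4*r) \<subseteq> D" and e: "0 < e" for z0 r e
  proof -
    define \<delta> where "\<delta> = min r (e*r/6)"
    have \<delta>: "0 < \<delta>" "\<delta> \<le> r" "\<delta> \<le> e*r/6" using z0r e by (auto simp: \<delta>_def)
    have b2: "ball z0 (2*(2*r)) \<subseteq> D" using z0r by (simp add: mult.assoc[symmetric])
    have lip: "norm (H m x - H m y) \<le> 1/r * norm (x - y)" if "x \<in> ball z0 (2*r)" "y \<in> ball z0 (2*r)" for m x y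
    proof -
      have "norm (H m x - H m y) \<le> 2 / (2*r) * norm (x - y)"
        by (rule lipschitz_ball[OF holH[of m] _ b2 bdH that]) (use z0r in simp)
      then show ?thesis by simp
    qed
    have "cball z0 r \<subseteq> ball z0 (4*r)"
    proof
      fix x assume "x \<in> cball z0 r"
      then show "x \<in> ball z0 (4*r)" using z0r(1) by simp
    qed
    then have cD: "cball z0 r \<subseteq> D" using z0r(2) by blast
    have cover: "cball z0 r \<subseteq> (\<Union>q\<in>R \<inter> ball z0 (2*r). ball q \<delta>)"
    proof
      fix w assume w: "w \<in> cball z0 r"
      then have "w \<in> closure R" using R(3) cD by blast
      then obtain q where q: "q \<in> R" "dist q w < \<delta>" using closure_approachable \<delta>(1) by blast
      have "dist z0 w \<le> r" using w by simp
      then have "dist z0 q < 2*r" using q(2) \<delta>(2) dist_triangle[of z0 q w] by (simp add: dist_commute)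
      then show "w \<in> (\<Union>q\<in>R \<inter> ball z0 (2*r). ball q \<delta>)" using q by auto
    qed
    obtain F where F: "F \<subseteq> R \<inter> ball z0 (2*r)" "finite F" "cball z0 r \<subseteq> (\<Union>q\<in>F. ball q \<delta>)"
      using compactE_image[OF compact_cball _ cover] by blast
    have "\<forall>q\<in>F. \<exists>N. \<forall>m\<ge>N. \<forall>n\<ge>N. norm (H m q - H n q) < e/3"
    proof
      fix q assume "q \<in> F"
      then have "Cauchy (\<lambda>n. H n q)" using convR F(1) convergent_Cauchy by blast
      moreover have "0 < e/3" using e by simp
      ultimately show "\<exists>N. \<forall>m\<ge>N. \<forall>n\<ge>N. norm (H m q - H n q) < e/3" unfolding Cauchy_def dist_norm by blast
    qed
    then have "\<exists>Nf. \<forall>q\<in>F. \<forall>m\<ge>Nf q. \<forall>n\<ge>Nf q. norm (H m q - H n q) < e/3" by (rule bchoice)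
    then obtain Nf where Nf: "\<And>q m n. q \<in> F \<Longrightarrow> m \<ge> Nf q \<Longrightarrow> n \<ge> Nf q \<Longrightarrow> norm (H m q - H n q) < e/3"
      by blast
    define N where "N = (\<Sum>q\<in>F. Nf q)"
    have NN: "Nf q \<le> N" if "q \<in> F" for q using F(2) that by (simp add: N_def member_le_sum)
    show ?thesis
    proof (intro exI allI impI ballI)
      fix m n w assume mn: "N \<le> m" "N \<le> n" and w: "w \<in> cball z0 r"
      obtain q where q: "q \<in> F" "w \<in> ball q \<delta>" using F(3) w by blast
      have wb: "w \<in> ball z0 (2*r)" using w z0r by auto
      have qb: "q \<in> ball z0 (2*r)" using q F(1) by blast
      have dq: "norm (w - q) < \<delta>" using q(2) by (simp add: dist_norm norm_minus_commute)
      have 1: "norm (H m w - H m q) \<le> 1/r * norm (w - q)" by (rule lip[OF wb qb])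
      have 2: "norm (H n q - H n w) \<le> 1/r * norm (w - q)" using lip[OF qb wb] by (simp add: norm_minus_commute)
      have 3: "norm (H m q - H n q) < e/3" using Nf[OF q(1)] NN[OF q(1)] mn by auto
      have 4: "1/r * norm (w - q) \<le> e/6"
      proof -
        have "norm (w - q) \<le> e*r/6" using dq \<delta>(3) by linarith
        then have "1/r * norm (w - q) \<le> 1/r * (e*r/6)" by (rule mult_left_mono) (use z0r in simp)
        also have "1/r * (e*r/6) = e/6" using z0r(1) by simp
        finally show ?thesis .
      qed
      have eqs: "H m w - H n w = (H m w - H m q) + ((H m q - H n q) + (H n q - H n w))" by simp
      have t1: "norm ((H m q - H n q) + (H n q - H n w)) \<le> norm (H m q - H n q) + norm (H n q - H n w)"
        by (rule norm_triangle_ineq)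
      have "norm (H m w - H n w) \<le> norm (H m w - H m q) + norm ((H m q - H n q) + (H n q - H n w))"
        unfolding eqs by (rule norm_triangle_ineq)
      then have "norm (H m w - H n w) \<le> norm (H m w - H m q) + norm (H m q - H n q) + norm (H n q - H n w)"
        using t1 by linarith
      then show "norm (H m w - H n w) < e" using 1 2 3 4 e by linarith
    qed
  qed
  have ball4: "\<exists>r>0. ball z (4*r) \<subseteq> D" if zD: "z \<in> D" for z
  proof -
    obtain e where e: "e > 0" "ball z e \<subseteq> D" using open_contains_ball[THEN iffD1, OF D] zD by blast
    have "4*(e/4) = e" by simp
    then have "e/4 > 0 \<and> ball z (4*(e/4)) \<subseteq> D" using e by simp
    then show ?thesis by blast
  qed
  have conv: "convergent (\<lambda>n. H n z)" if z: "z \<in> D" for z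
  proof -
    obtain r where r: "0 < r" "ball z (4*r) \<subseteq> D" using ball4 z by blast
    have "Cauchy (\<lambda>n. H n z)"
      unfolding Cauchy_def dist_norm
    proof (intro allI impI)
      fix e :: real assume "0 < e"
      then obtain N where "\<forall>m\<ge>N. \<forall>n\<ge>N. \<forall>w\<in>cball z r. norm (H m w - H n w) < e" using UC[OF r] by blast
      moreover have "z \<in> cball z r" using r by simp
      ultimately show "\<exists>M. \<forall>m\<ge>M. \<forall>n\<ge>M. norm (H m z - H n z) < e" by blast
    qed
    then show ?thesis using Cauchy_convergent by blast
  qed
  define g where "g z = lim (\<lambda>n. H n z)" for z
  have gl: "(\<lambda>n. H n z) \<longlonglongrightarrow> g z" if zD: "z \<in> D" for z
    using conv[OF zD] by (simp add: g_def convergent_LIMSEQ_iff)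
  define L where "L n w = frechet_derivative (H n) (at w)" for n w
  define g' where "g' w h = lim (\<lambda>n. L n w h)" for w h
  have loc: "(g has_derivative g' z0) (at z0) \<and> (\<forall>c x. g' z0 (c *s x) = c * g' z0 x) \<and> (\<forall>h. (\<lambda>n. L n z0 h) \<longlonglongrightarrow> g' z0 h)"
    if z0: "z0 \<in> D" for z0
  proof -
    obtain r where r: "0 < r" "ball z0 (4*r) \<subseteq> D" using ball4 z0 by blast
    have "cball z0 r \<subseteq> ball z0 (4*r)"
    proof
      fix x assume "x \<in> cball z0 r"
      then show "x \<in> ball z0 (4*r)" using r(1) by simp
    qed
    then have cD: "cball z0 r \<subseteq> D" using r(2) by blast
    define S where "S = ball z0 (r/2)"
    have SD: "S \<subseteq> D" using cD r by (auto simp: S_def)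
    have z0S: "z0 \<in> S" using r by (simp add: S_def)
    have LC: "\<exists>N. \<forall>m\<ge>N. \<forall>n\<ge>N. \<forall>w\<in>S. \<forall>h. norm (L m w h - L n w h) \<le> \<eta> * norm h" if \<eta>: "0 < \<eta>" for \<eta>
    proof -
      obtain N where N: "\<forall>m\<ge>N. \<forall>n\<ge>N. \<forall>w\<in>cball z0 r. norm (H m w - H n w) < \<eta>*r/4"
        using UC[OF r, of "\<eta>*r/4"] \<eta> r by auto
      show ?thesis
      proof (intro exI allI impI ballI)
        fix m n w h assume mn: "N \<le> m" "N \<le> n" and w: "w \<in> S"
        have bw: "ball w (r/2) \<subseteq> cball z0 r"
        proof
          fix x assume "x \<in> ball w (r/2)"
          then have "dist w x < r/2" "dist z0 w < r/2" using w by (auto simp: S_def)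
          then show "x \<in> cball z0 r" using dist_triangle[of z0 x w] by simp
        qed
        have wD: "w \<in> D" using w SD by blast
        have hd: "holo_fun D (\<lambda>z. H m z - H n z)" by (rule holo_fun_diff(1)[OF holH holH])
        have "norm (frechet_derivative (\<lambda>z. H m z - H n z) (at w) h) \<le> 2 * (\<eta>*r/4) / (r/2) * norm h"
        proof (rule cauchy_est[OF hd])
          show "0 < r/2" using r by simp
          show "ball w (r/2) \<subseteq> D" using bw cD by blast
          show "norm (H m z - H n z) \<le> \<eta>*r/4" if zb: "z \<in> ball w (r/2)" for z
            using N mn bw zb by (meson less_imp_le subsetD)
        qed
        moreover have "2 * (\<eta>*r/4) / (r/2) = \<eta>" using r by (simp add: field_simps)
        moreover have "frechet_derivative (\<lambda>z. H m z - H n z) (at w) h = L m w h - L n w h"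
          unfolding L_def by (rule holo_fun_diff(2)[OF holH holH wD])
        ultimately show "norm (L m w h - L n w h) \<le> \<eta> * norm h" by simp
      qed
    qed
    have convL: "convergent (\<lambda>n. L n w h)" if w: "w \<in> S" for w h
    proof -
      have "Cauchy (\<lambda>n. L n w h)"
        unfolding Cauchy_def dist_norm
      proof (intro allI impI)
        fix e :: real assume e: "0 < e"
        define \<eta> where "\<eta> = e / (norm h + 1)"
        have np: "0 < norm h + 1" by (simp add: add_nonneg_pos)
        have \<eta>1: "0 < \<eta>" using e np by (simp add: \<eta>_def)
        have "norm h / (norm h + 1) < 1" using np by simp
        then have "e * (norm h / (norm h + 1)) < e * 1" using e by (intro mult_strict_left_mono)
        then have \<eta>2: "\<eta> * norm h < e" by (simp add: \<eta>_def)
        obtain N where N: "\<forall>m\<ge>N. \<forall>n\<ge>N. \<forall>w\<in>S. \<forall>h. norm (L m w h - L n w h) \<le> \<eta> * norm h"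
          using LC[OF \<eta>1] by blast
        show "\<exists>M. \<forall>m\<ge>M. \<forall>n\<ge>M. norm (L m w h - L n w h) < e"
        proof (intro exI allI impI)
          fix m n assume "N \<le> m" "N \<le> n"
          then have "norm (L m w h - L n w h) \<le> \<eta> * norm h" using N w by blast
          then show "norm (L m w h - L n w h) < e" using \<eta>2 by linarith
        qed
      qed
      then show ?thesis using Cauchy_convergent by blast
    qed
    have limL: "(\<lambda>n. L n w h) \<longlonglongrightarrow> g' w h" if wS: "w \<in> S" for w h
      using convL[OF wS] by (simp add: g'_def convergent_LIMSEQ_iff)
    have nle: "\<forall>\<^sub>F n in sequentially. \<forall>x\<in>S. \<forall>h. norm (L n x h - g' x h) \<le> \<eta> * norm h" if \<eta>0: "\<eta> > 0" for \<eta>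
    proof -
      obtain N where N: "\<forall>m\<ge>N. \<forall>n\<ge>N. \<forall>w\<in>S. \<forall>h. norm (L m w h - L n w h) \<le> \<eta> * norm h"
        using LC[OF \<eta>0] by blast
      show ?thesis
        unfolding eventually_sequentially
      proof (intro exI allI impI ballI)
        fix n x h assume n: "N \<le> n" and x: "x \<in> S"
        have "(\<lambda>m. norm (L n x h - L m x h)) \<longlonglongrightarrow> norm (L n x h - g' x h)"
          by (intro tendsto_intros limL x)
        moreover have "\<forall>m\<ge>N. norm (L n x h - L m x h) \<le> \<eta> * norm h" using N n x by blast
        ultimately show "norm (L n x h - g' x h) \<le> \<eta> * norm h" by (rule Lim_bounded)
      qed
    qed
    have derH: "(H n has_derivative L n x) (at x within S)" if xS: "x \<in> S" for n x
    proof -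
      have "x \<in> D" using xS SD by blast
      then show ?thesis unfolding L_def by (rule has_derivative_at_withinI[OF holo_fun_D(1)[OF holH]])
    qed
    obtain gt where gt: "\<forall>x\<in>S. (\<lambda>n. H n x) \<longlonglongrightarrow> gt x \<and> (gt has_derivative g' x) (at x within S)"
      using has_derivative_sequence[OF convex_ball[of z0 "r/2", folded S_def] derH nle z0S gl[OF z0]] by blast
    have eqg: "gt x = g x" if xS: "x \<in> S" for x
    proof -
      have "x \<in> D" using xS SD by blast
      then have "(\<lambda>n. H n x) \<longlonglongrightarrow> g x" by (rule gl)
      moreover have "(\<lambda>n. H n x) \<longlonglongrightarrow> gt x" using gt xS by blast
      ultimately show ?thesis by (rule LIMSEQ_unique[rotated])
    qed
    have "(gt has_derivative g' z0) (at z0)"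
    proof -
      have "(gt has_derivative g' z0) (at z0 within S)" using gt z0S by blast
      moreover have "at z0 within S = at z0" using at_within_open[OF z0S] by (simp add: S_def)
      ultimately show ?thesis by simp
    qed
    then have dg: "(g has_derivative g' z0) (at z0)"
      by (rule has_derivative_transform_within_open[OF _ _ z0S]) (auto simp: S_def eqg)
    have lin: "g' z0 (c *s x) = c * g' z0 x" for c x
    proof -
      have "(\<lambda>n. L n z0 (c *s x)) \<longlonglongrightarrow> g' z0 (c *s x)" by (rule limL[OF z0S])
      moreover have "(\<lambda>n. L n z0 (c *s x)) = (\<lambda>n. c * L n z0 x)"
        unfolding L_def using holo_fun_D(2)[OF holH z0] by simp
      moreover have "(\<lambda>n. c * L n z0 x) \<longlonglongrightarrow> c * g' z0 x" by (intro tendsto_intros limL z0S)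
      ultimately show ?thesis using LIMSEQ_unique by metis
    qed
    show ?thesis using dg lin limL z0S by blast
  qed
  show ?thesis
  proof (rule that[OF s(1)])
    show hg: "holo_fun D g" unfolding holo_fun_def using loc by blast
    show "\<And>z. z \<in> D \<Longrightarrow> (\<lambda>n. G (s n) z) \<longlonglongrightarrow> g z" using gl by (simp add: H_def)
    fix z h assume z: "z \<in> D"
    have "g' z = frechet_derivative g (at z)" using loc[OF z] frechet_derivative_at by blast
    then show "(\<lambda>n. frechet_derivative (G (s n)) (at z) h) \<longlonglongrightarrow> frechet_derivative g (at z) h"
      using loc[OF z] by (simp add: L_def H_def)
  qed
qed


lemma holo_max:
  fixes g :: "complex^'n \<Rightarrow> complex" and D :: "(complex^'n) set"
  assumes D: "open D" "connected D" and hg: "holo_fun D g" and le: "\<And>z. z \<in> D \<Longrightarrow> norm (g z) \<le> 1"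
    and x0: "x0 \<in> D" "norm (g x0) < 1" and z1: "z1 \<in> D"
  shows "norm (g z1) < 1"
proof (rule ccontr)
  assume "\<not> norm (g z1) < 1"
  then have n1: "norm (g z1) = 1" using le[OF z1] by simp
  define c where "c = g z1"
  define A where "A = {z \<in> D. g z = c}"
  have "open A"
    unfolding open_contains_ball
  proof
    fix z assume zA: "z \<in> A"
    then have zD: "z \<in> D" and gz: "g z = c" by (auto simp: A_def)
    obtain \<rho> where \<rho>: "\<rho> > 0" "ball z \<rho> \<subseteq> D" using open_contains_ball[THEN iffD1, OF D(1)] zD by blast
    have "ball z \<rho> \<subseteq> A"
    proof
      fix w assume w: "w \<in> ball z \<rho>"
      show "w \<in> A"
      proof (cases "w = z")
        case True then show ?thesis using zA by simp
      next
        case False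
        define d where "d = w - z"
        have nd: "0 < norm d" "norm d < \<rho>" using False w by (auto simp: d_def dist_norm norm_minus_commute)
        define R where "R = \<rho> / norm d"
        have R1: "1 < R" using nd by (simp add: R_def)
        define \<phi> where "\<phi> = (\<lambda>t::complex. g (z + t *s d))"
        have inD: "z + t *s d \<in> ball z \<rho>" if "t \<in> ball (0::complex) R" for t
        proof -
          have "cmod t * norm d < R * norm d" using that nd by (intro mult_strict_right_mono) auto
          then show ?thesis using nd by (simp add: dist_norm norm_smult_vec R_def)
        qed
        have hol: "\<phi> holomorphic_on ball 0 R"
          unfolding holomorphic_on_open[OF open_ball] field_differentiable_def[symmetric]
        proof
          fix t :: complex assume "t \<in> ball 0 R"
          then have "z + t *s d \<in> D" using inD \<rho>(2) by blast
          then show "\<phi> field_differentiable at t"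
            unfolding \<phi>_def field_differentiable_def using holo_fun_line[OF hg] by blast
        qed
        have "\<phi> constant_on ball 0 R"
        proof (rule maximum_modulus_principle[OF hol open_ball connected_ball open_ball order_refl])
          show "0 \<in> ball 0 R" using R1 by simp
          show "norm (\<phi> t) \<le> norm (\<phi> 0)" if "t \<in> ball 0 R" for t
          proof -
            have "\<phi> 0 = c" using gz by (simp add: \<phi>_def)
            moreover have "norm (\<phi> t) \<le> 1" unfolding \<phi>_def using le inD[OF that] \<rho>(2) by blast
            ultimately show ?thesis using n1 c_def by simp
          qed
        qed
        then obtain k where k: "\<And>t. t \<in> ball 0 R \<Longrightarrow> \<phi> t = k" unfolding constant_on_def by blast
        have "\<phi> 1 = \<phi> 0" using k[of 1] k[of 0] R1 by simp
        then have "g w = c" using gz by (simp add: \<phi>_def d_def)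
        then show ?thesis using w \<rho>(2) by (auto simp: A_def)
      qed
    qed
    then show "\<exists>e>0. ball z e \<subseteq> A" using \<rho>(1) by blast
  qed
  then have op: "openin (top_of_set D) A" by (rule open_subset[rotated]) (auto simp: A_def)
  have cl: "closedin (top_of_set D) A"
    unfolding A_def by (rule continuous_closedin_preimage_constant[OF holo_fun_cont[OF hg]])
  have "A \<noteq> {}" using z1 by (auto simp: A_def c_def)
  then have "A = D" using D(2) op cl unfolding connected_clopen by blast
  then have "g x0 = c" using x0(1) by (auto simp: A_def)
  then show False using x0(2) n1 c_def by simp
qed

lemma Mb_deriv_self: "norm p < 1 \<Longrightarrow> deriv (Mb p) p = 1 / (1 - complex_of_real ((cmod p)^2))"
proof -
  assume p: "norm p < 1"
  have ne: "1 - complex_of_real ((cmod p)\<^sup>2) \<noteq> 0"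
    using p by (metis abs_of_nonneg cnj_mult_self denom_nz norm_ge_zero)
  have "(Mb p has_field_derivative 1 / (1 - complex_of_real ((cmod p)^2))) (at p)"
    using Mb_deriv[OF p p] ne by (simp add: cnj_mult_self power2_eq_square)
  then show ?thesis by (rule DERIV_imp_deriv)
qed

lemma pd0: "poincare_dist 0 w = artanh (cmod w)"
  by (simp add: poincare_dist_def)

lemma Mb0: "Mb 0 w = w" by (simp add: Mb_simp)

lemma pd_Mb_inv: "norm p < 1 \<Longrightarrow> poincare_dist (Mb p p) (Mb p q) = poincare_dist p q"
  by (simp add: Mb_zero pd_Mb norm_Mb_sym Mb0)

lemma pm_Mb_inv:
  assumes "norm p < 1"
  shows "poincare_metric (Mb p p) (deriv (Mb p) p * v) = poincare_metric p v"
proof -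
  have pf: "0 < 1 - (cmod p)^2" using assms by (simp add: power_less_one_iff abs_less_iff)
  have gen: "\<And>a. 0 < a \<Longrightarrow> norm (1 / complex_of_real a * v) = norm v / a"
    by (simp add: norm_mult norm_divide)
  have Dd: "deriv (Mb p) p = 1 / complex_of_real (1 - (cmod p)^2)" using Mb_deriv_self[OF assms] by simp
  have "poincare_metric (Mb p p) (deriv (Mb p) p * v) = cmod (deriv (Mb p) p * v)"
    by (simp add: poincare_metric_def Mb_zero)
  also have "\<dots> = cmod (1 / complex_of_real (1 - (cmod p)^2) * v)" by (simp only: Dd)
  also have "\<dots> = norm v / (1 - (cmod p)^2)" by (rule gen[OF pf])
  also have "\<dots> = poincare_metric p v" by (simp add: poincare_metric_def)
  finally show ?thesis .
qed

context dsm
begin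

lemma normal_limit:
  fixes G0 :: "nat \<Rightarrow> complex^'n \<Rightarrow> complex"
  assumes G0: "\<And>k. holo_D_to_disc D (G0 k)" and x: "x \<in> D"
  obtains s g where "strict_mono s" "holo_D_to_disc D g" "g x = 0"
    "\<And>z. z \<in> D \<Longrightarrow> (\<lambda>n. Mb (G0 (s n) x) (G0 (s n) z)) \<longlonglongrightarrow> g z"
    "\<And>z h. z \<in> D \<Longrightarrow> (\<lambda>n. frechet_derivative (\<lambda>w. Mb (G0 (s n) x) (G0 (s n) w)) (at z) h) \<longlonglongrightarrow> frechet_derivative g (at z) h"
proof -
  define G where "G k = (\<lambda>w. Mb (G0 k x) (G0 k w))" for k
  have into: "\<And>k z. z \<in> D \<Longrightarrow> norm (G0 k z) < 1" using G0 unfolding holo_D_to_disc_def by (meson image_subset_iff mem_ball_0)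
  have holG: "holo_fun D (G k)" for k
  proof -
    have "holo_fun D (Mb (G0 k x) \<circ> G0 k)"
      by (rule holo_fun_comp[where S="ball 0 1"]) (use G0 into x in \<open>auto simp: holo_D_to_disc_def intro!: Mb_hol\<close>)
    then show ?thesis by (simp add: G_def o_def)
  qed
  have bdG: "norm (G k z) \<le> 1" if zD: "z \<in> D" for k z
    using Mb_norm[OF into[of x k, OF x] into[of z k, OF zD]] by (simp add: G_def)
  obtain s g where sg: "strict_mono s" "holo_fun D g" "\<And>z. z \<in> D \<Longrightarrow> (\<lambda>n. G (s n) z) \<longlonglongrightarrow> g z"
    "\<And>z h. z \<in> D \<Longrightarrow> (\<lambda>n. frechet_derivative (G (s n)) (at z) h) \<longlonglongrightarrow> frechet_derivative g (at z) h"
  proof (rule montel_cn[of D G, OF openD holG bdG])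
    fix s g
    assume "strict_mono s" "holo_fun D g" "\<And>z. z \<in> D \<Longrightarrow> (\<lambda>n. G (s n) z) \<longlonglongrightarrow> g z"
      "\<And>z h. z \<in> D \<Longrightarrow> (\<lambda>n. frechet_derivative (G (s n)) (at z) h) \<longlonglongrightarrow> frechet_derivative g (at z) h"
    then show thesis by (rule that)
  qed
  have gle: "norm (g z) \<le> 1" if z: "z \<in> D" for z
  proof -
    have "(\<lambda>n. norm (G (s n) z)) \<longlonglongrightarrow> norm (g z)" by (intro tendsto_intros sg(3) z)
    then show ?thesis by (rule Lim_bounded[where M=0]) (use bdG z in auto)
  qed
  have gx: "g x = 0"
  proof -
    have "(\<lambda>n. G (s n) x) \<longlonglongrightarrow> g x" by (rule sg(3)[OF x])
    moreover have "(\<lambda>n. G (s n) x) = (\<lambda>n. 0)" by (simp add: G_def Mb_zero)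
    ultimately have "(\<lambda>n. 0) \<longlonglongrightarrow> g x" by simp
    then show ?thesis by (simp add: LIMSEQ_const_iff)
  qed
  have glt: "norm (g z) < 1" if zD: "z \<in> D" for z
  proof -
    have "norm (g x) < 1" using gx by simp
    from holo_max[OF openD connD sg(2) gle x this zD] show ?thesis .
  qed
  have hD: "holo_D_to_disc D g" unfolding holo_D_to_disc_def using sg(2) glt by auto
  show ?thesis
  proof (rule that[OF sg(1) hD gx])
    fix z assume z: "z \<in> D"
    show "(\<lambda>n. Mb (G0 (s n) x) (G0 (s n) z)) \<longlonglongrightarrow> g z" using sg(3)[OF z] by (simp add: G_def)
  next
    fix z h assume z: "z \<in> D"
    show "(\<lambda>n. frechet_derivative (\<lambda>w. Mb (G0 (s n) x) (G0 (s n) w)) (at z) h) \<longlonglongrightarrow> frechet_derivative g (at z) h"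
      using sg(4)[OF z] by (simp add: G_def)
  qed
qed

end


context dsm
begin

definition "XX \<longleftrightarrow> (\<exists>g. holo_D_to_disc D g \<and> (\<forall>\<zeta>\<in>ball 0 1. g (\<psi> \<zeta>) = \<zeta>))"

lemma V_ex: "x \<in> V \<Longrightarrow> \<exists>a\<in>ball 0 1. x = \<psi> a"
  using psi_img by auto

lemma into_g: "holo_D_to_disc D g \<Longrightarrow> z \<in> D \<Longrightarrow> g z \<in> ball 0 1"
  unfolding holo_D_to_disc_def by blast

lemma fin_X:
  assumes g: "holo_D_to_disc D g"
    and h: "h holomorphic_on ball 0 1" "h ` ball 0 1 \<subseteq> ball 0 1" "\<forall>\<zeta>\<in>ball 0 1. h ((g \<circ> \<psi>) \<zeta>) = \<zeta>"
  shows XX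
proof -
  have "holo_fun D (h \<circ> g)"
    by (rule holo_fun_comp[OF _ _ open_ball h(1)]) (use g in \<open>auto simp: holo_D_to_disc_def\<close>)
  moreover have "(h \<circ> g) ` D \<subseteq> ball 0 1" using h(2) into_g[OF g] by auto
  moreover have "\<forall>\<zeta>\<in>ball 0 1. (h \<circ> g) (\<psi> \<zeta>) = \<zeta>" using h(3) by simp
  ultimately show ?thesis unfolding XX_def holo_D_to_disc_def by blast
qed

lemma X_i: "XX \<Longrightarrow> \<exists>\<rho>. holo_retraction D \<rho> \<and> \<rho> ` D = V"
proof -
  assume XX
  then obtain g where g: "holo_D_to_disc D g" "\<And>\<zeta>. \<zeta> \<in> ball 0 1 \<Longrightarrow> g (\<psi> \<zeta>) = \<zeta>" unfolding XX_def by blast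
  define \<rho> where "\<rho> = (\<lambda>z. \<psi> (g z))"
  have hm: "holo_map D \<rho>"
    unfolding holo_map_def
  proof
    fix i
    have "holo_fun D ((\<lambda>t. \<psi> t $ i) \<circ> g)"
      by (rule holo_fun_comp[OF _ _ open_ball]) (use g(1) psi_hol in \<open>auto simp: holo_D_to_disc_def holo_disc_map_def\<close>)
    then show "holo_fun D (\<lambda>z. \<rho> z $ i)" by (simp add: \<rho>_def o_def)
  qed
  have img: "\<rho> ` D = V"
  proof
    show "\<rho> ` D \<subseteq> V" using into_g[OF g(1)] psi_img by (auto simp: \<rho>_def)
    show "V \<subseteq> \<rho> ` D"
    proof
      fix x assume "x \<in> V"
      then obtain a where a: "a \<in> ball 0 1" "x = \<psi> a" using V_ex by blast
      then have "\<rho> (\<psi> a) = x" using g(2) by (simp add: \<rho>_def)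
      moreover have "\<psi> a \<in> D" using a psi_D by blast
      ultimately show "x \<in> \<rho> ` D" by force
    qed
  qed
  have "holo_retraction D \<rho>"
    unfolding holo_retraction_def
  proof (intro conjI hm ballI)
    show "\<rho> ` D \<subseteq> D" using img VD by simp
    fix z assume "z \<in> D"
    then show "\<rho> (\<rho> z) = \<rho> z" using g into_g[OF g(1)] by (simp add: \<rho>_def)
  qed
  then show ?thesis using img by blast
qed

lemma i_X:
  assumes r: "holo_retraction D \<rho>" "\<rho> ` D = V"
  shows XX
proof -
  have hm: "holo_map D \<rho>" using r(1) unfolding holo_retraction_def by blast
  have idem: "\<And>z. z \<in> D \<Longrightarrow> \<rho> (\<rho> z) = \<rho> z" using r(1) unfolding holo_retraction_def by blast
  have hf: "holo_fun D (\<lambda>z. pinv (\<rho> z))" by (rule holo_fun_pinv[OF hm openD]) (use r(2) in simp)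
  have "(\<lambda>z. pinv (\<rho> z)) ` D \<subseteq> ball 0 1" using pinv_in r(2) by auto
  moreover have "pinv (\<rho> (\<psi> \<zeta>)) = \<zeta>" if z: "\<zeta> \<in> ball 0 1" for \<zeta>
  proof -
    have "\<psi> \<zeta> \<in> V" using z psi_img by blast
    then obtain w where w: "w \<in> D" "\<psi> \<zeta> = \<rho> w" using r(2) by force
    then have "\<rho> (\<psi> \<zeta>) = \<psi> \<zeta>" using idem by simp
    then show ?thesis using pinv_psi z by simp
  qed
  ultimately show ?thesis unfolding XX_def holo_D_to_disc_def using hf by blast
qed

lemma X_iii: "XX \<Longrightarrow> \<forall>x\<in>V. \<forall>y\<in>V. cara_dist_D D x y = cara_dist_V \<psi> x y"
proof (intro ballI)
  assume XX
  then obtain g where g: "holo_D_to_disc D g" "\<And>\<zeta>. \<zeta> \<in> ball 0 1 \<Longrightarrow> g (\<psi> \<zeta>) = \<zeta>" unfolding XX_def by blast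
  fix x y assume "x \<in> V" "y \<in> V"
  then obtain a b where ab: "a \<in> ball 0 1" "b \<in> ball 0 1" "x = \<psi> a" "y = \<psi> b" using V_ex by blast
  have "poincare_dist a b \<le> cara_dist_D D (\<psi> a) (\<psi> b)" using cD_ge[OF ab(1,2) g(1)] g(2) ab by simp
  then show "cara_dist_D D x y = cara_dist_V \<psi> x y"
    using cD_le[OF ab(1,2)] cV_eq[OF ab(1,2)] ab by simp
qed

lemma iii_ii: "\<forall>x\<in>V. \<forall>y\<in>V. cara_dist_D D x y = cara_dist_V \<psi> x y \<Longrightarrow> \<exists>\<phi>. complex_geodesic D \<phi> \<and> \<phi> ` ball 0 1 = V"
proof -
  assume h: "\<forall>x\<in>V. \<forall>y\<in>V. cara_dist_D D x y = cara_dist_V \<psi> x y"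
  have "complex_geodesic D \<psi>"
    unfolding complex_geodesic_def
  proof (intro conjI psi_hol psi_D ballI)
    fix \<zeta> \<eta> :: complex assume z: "\<zeta> \<in> ball 0 1" "\<eta> \<in> ball 0 1"
    then have "\<psi> \<zeta> \<in> V" "\<psi> \<eta> \<in> V" using psi_img by auto
    then show "cara_dist_D D (\<psi> \<zeta>) (\<psi> \<eta>) = poincare_dist \<zeta> \<eta>" using h cV_eq[OF z] by simp
  qed
  then show ?thesis using psi_img by blast
qed

lemma ii_iii:
  assumes "complex_geodesic D \<phi>" "\<phi> ` ball 0 1 = V"
  shows "\<forall>x\<in>V. \<forall>y\<in>V. cara_dist_D D x y = cara_dist_V \<psi> x y"
proof (intro ballI)
  have hp: "holo_disc_map \<phi>" and geo: "\<And>\<zeta> \<eta>. \<zeta> \<in> ball 0 1 \<Longrightarrow> \<eta> \<in> ball 0 1 \<Longrightarrow> cara_dist_D D (\<phi> \<zeta>) (\<phi> \<eta>) = poincare_dist \<zeta> \<eta>"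
    using assms(1) unfolding complex_geodesic_def by blast+
  define k where "k = (\<lambda>z. pinv (\<phi> z))"
  have hk: "k holomorphic_on ball 0 1" unfolding k_def by (rule hol_pinv_disc[OF hp]) (use assms(2) in simp)
  have kin: "k ` ball 0 1 \<subseteq> ball 0 1" unfolding k_def using pinv_in assms(2) by auto
  have pk: "\<psi> (k z) = \<phi> z" if "z \<in> ball 0 1" for z unfolding k_def using psi_pinv assms(2) that by blast
  fix x y assume "x \<in> V" "y \<in> V"
  then obtain \<zeta> \<eta> where ze: "\<zeta> \<in> ball 0 1" "\<eta> \<in> ball 0 1" "x = \<phi> \<zeta>" "y = \<phi> \<eta>" using assms(2) by force
  have kz1: "k \<zeta> \<in> ball 0 1" using kin ze(1) by blast
  have kz2: "k \<eta> \<in> ball 0 1" using kin ze(2) by blast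
  note kz = kz1 kz2
  interpret sp k \<eta> using hk kin ze(2) by (simp add: sp_def)
  have "poincare_dist (k \<zeta>) (k \<eta>) \<le> poincare_dist \<zeta> \<eta>" using dist_le ze(1) by simp
  moreover have "cara_dist_V \<psi> x y = poincare_dist (k \<zeta>) (k \<eta>)"
    using cV_eq[OF kz] pk ze by simp
  moreover have "cara_dist_D D x y = poincare_dist \<zeta> \<eta>" using geo ze by simp
  moreover have "cara_dist_D D x y \<le> poincare_dist (k \<zeta>) (k \<eta>)"
    using cD_le[OF kz] pk ze by simp
  ultimately show "cara_dist_D D x y = cara_dist_V \<psi> x y" by simp
qed

lemma iii_iv: "\<forall>x\<in>V. \<forall>y\<in>V. cara_dist_D D x y = cara_dist_V \<psi> x y \<Longrightarrow>
   \<exists>x\<in>V. \<exists>y\<in>V. x \<noteq> y \<and> cara_dist_D D x y = cara_dist_V \<psi> x y"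
proof -
  assume h: "\<forall>x\<in>V. \<forall>y\<in>V. cara_dist_D D x y = cara_dist_V \<psi> x y"
  have m: "(0::complex) \<in> ball 0 1" "(1/2::complex) \<in> ball 0 1" by auto
  then have "\<psi> 0 \<noteq> \<psi> (1/2)" using psi_inj by (metis inj_onD zero_neq_numeral divide_eq_0_iff one_neq_zero)
  moreover have "\<psi> 0 \<in> V" "\<psi> (1/2) \<in> V" using m psi_img by auto
  ultimately show ?thesis using h by blast
qed

lemma deriv_id_psi: "(\<forall>\<zeta>\<in>ball 0 1. g (\<psi> \<zeta>) = \<zeta>) \<Longrightarrow> \<zeta> \<in> ball 0 1 \<Longrightarrow> deriv (g \<circ> \<psi>) \<zeta> = 1"
proof -
  assume h: "\<forall>\<zeta>\<in>ball 0 1. g (\<psi> \<zeta>) = \<zeta>" and z: "\<zeta> \<in> ball 0 1"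
  have "((\<lambda>x. x) has_field_derivative 1) (at \<zeta>)" by (rule DERIV_ident)
  then have "((g \<circ> \<psi>) has_field_derivative 1) (at \<zeta>)"
    by (rule has_field_derivative_transform_within_open[OF _ open_ball z]) (simp add: h)
  then show ?thesis by (rule DERIV_imp_deriv)
qed

lemma X_v: "XX \<Longrightarrow> \<forall>x\<in>V. \<forall>v\<in>tangent_V \<psi> x. cara_metric_D D x v = cara_metric_V \<psi> x v"
proof (intro ballI)
  assume XX
  then obtain g where g: "holo_D_to_disc D g" "\<forall>\<zeta>\<in>ball 0 1. g (\<psi> \<zeta>) = \<zeta>" unfolding XX_def by blast
  fix x v assume x: "x \<in> V" and v: "v \<in> tangent_V \<psi> x"
  then obtain \<zeta> where z: "\<zeta> \<in> ball 0 1" "x = \<psi> \<zeta>" using V_ex by blast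
  then obtain c where c: "v = c *s disc_map_deriv \<psi> \<zeta>" using tangent_char v by blast
  have hf: "holo_fun D g" using g(1) unfolding holo_D_to_disc_def by blast
  have "poincare_metric (g (\<psi> \<zeta>)) (frechet_derivative g (at (\<psi> \<zeta>)) (c *s disc_map_deriv \<psi> \<zeta>)) = cmod c / (1 - (cmod \<zeta>)^2)"
    using frechet_psi[OF hf z(1)] deriv_id_psi[OF g(2) z(1)] g(2) z(1) by (simp add: poincare_metric_def)
  then have "cmod c / (1 - (cmod \<zeta>)^2) \<le> cara_metric_D D (\<psi> \<zeta>) (c *s disc_map_deriv \<psi> \<zeta>)"
    using ED_ge[OF z(1) g(1), of c] by simp
  then show "cara_metric_D D x v = cara_metric_V \<psi> x v"
    using ED_le[OF z(1), of c] EV_eq[OF z(1), of c] c z by simp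
qed

lemma v_vi: "\<forall>x\<in>V. \<forall>v\<in>tangent_V \<psi> x. cara_metric_D D x v = cara_metric_V \<psi> x v \<Longrightarrow>
   \<exists>x\<in>V. \<exists>v\<in>tangent_V \<psi> x. v \<noteq> 0 \<and> cara_metric_D D x v = cara_metric_V \<psi> x v"
proof -
  assume h: "\<forall>x\<in>V. \<forall>v\<in>tangent_V \<psi> x. cara_metric_D D x v = cara_metric_V \<psi> x v"
  have m: "(0::complex) \<in> ball 0 1" by simp
  have "disc_map_deriv \<psi> 0 = 1 *s disc_map_deriv \<psi> 0" by (simp add: vec_eq_iff)
  then have "disc_map_deriv \<psi> 0 \<in> tangent_V \<psi> (\<psi> 0)"
    unfolding tangent_V_def using m by blast
  moreover have "\<psi> 0 \<in> V" using m psi_img by auto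
  moreover have "disc_map_deriv \<psi> 0 \<noteq> 0" using psi_dnz m by blast
  ultimately show ?thesis using h by blast
qed

end


context dsm
begin

lemma seq_lower:
  fixes d :: real and s :: "nat \<Rightarrow> nat" and Y :: "nat \<Rightarrow> real"
  assumes s: "strict_mono s" and Y: "Y \<longlonglongrightarrow> y" and lt: "\<And>n. d + - inverse (real (Suc (s n))) < Y n"
  shows "d \<le> y"
proof (rule LIMSEQ_le[OF LIMSEQ_inverse_real_of_nat_add_minus[of d] Y])
  show "\<exists>N. \<forall>n\<ge>N. d + - inverse (real (Suc n)) \<le> Y n"
  proof (intro exI allI impI)
    fix n :: nat
    have "n \<le> s n" using seq_suble[OF s] by blast
    then have "inverse (real (Suc (s n))) \<le> inverse (real (Suc n))"
      by (intro le_imp_inverse_le) auto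
    then show "d + - inverse (real (Suc n)) \<le> Y n" using lt[of n] by linarith
  qed
qed

lemma iv_X:
  assumes "\<exists>x\<in>V. \<exists>y\<in>V. x \<noteq> y \<and> cara_dist_D D x y = cara_dist_V \<psi> x y"
  shows XX
proof -
  obtain x y where xy: "x \<in> V" "y \<in> V" "x \<noteq> y" "cara_dist_D D x y = cara_dist_V \<psi> x y" using assms by blast
  obtain a b where ab: "a \<in> ball 0 1" "b \<in> ball 0 1" "x = \<psi> a" "y = \<psi> b" using V_ex xy(1,2) by blast
  have anb: "a \<noteq> b" using ab xy(3) by blast
  define d where "d = poincare_dist a b"
  have cd: "cara_dist_D D x y = d" using xy(4) cV_eq[OF ab(1,2)] ab by (simp add: d_def)
  define SD where "SD = {poincare_dist (g x) (g y) |g. holo_D_to_disc D g}"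
  have SDne: "SD \<noteq> {}" using const_D by (auto simp: SD_def)
  have SDb: "bdd_above SD" using bdd_SD[OF ab(1,2)] ab unfolding SD_def
    by (intro bdd_aboveI[where M="poincare_dist a b"]) blast
  have "\<exists>g. holo_D_to_disc D g \<and> d + - inverse (real (Suc k)) < poincare_dist (g x) (g y)" for k
  proof -
    have "d + - inverse (real (Suc k)) < Sup SD" using cd by (simp add: SD_def cara_dist_D_def)
    then obtain r where "r \<in> SD" "d + - inverse (real (Suc k)) < r" using less_cSup_iff[OF SDne SDb] by blast
    then show ?thesis unfolding SD_def by blast
  qed
  then obtain G0 where G0: "\<And>k. holo_D_to_disc D (G0 k)"
    "\<And>k. d + - inverse (real (Suc k)) < poincare_dist (G0 k x) (G0 k y)" by metis
  have xD: "x \<in> D" "y \<in> D" using xy VD by auto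
  obtain s g where sg: "strict_mono s" "holo_D_to_disc D g" "g x = 0"
    "\<And>z. z \<in> D \<Longrightarrow> (\<lambda>n. Mb (G0 (s n) x) (G0 (s n) z)) \<longlonglongrightarrow> g z"
    "\<And>z h. z \<in> D \<Longrightarrow> (\<lambda>n. frechet_derivative (\<lambda>w. Mb (G0 (s n) x) (G0 (s n) w)) (at z) h) \<longlonglongrightarrow> frechet_derivative g (at z) h"
  proof (rule normal_limit[of G0 x, OF G0(1) xD(1)])
    fix s g assume "strict_mono s" "holo_D_to_disc D g" "g x = 0"
      "\<And>z. z \<in> D \<Longrightarrow> (\<lambda>n. Mb (G0 (s n) x) (G0 (s n) z)) \<longlonglongrightarrow> g z"
      "\<And>z h. z \<in> D \<Longrightarrow> (\<lambda>n. frechet_derivative (\<lambda>w. Mb (G0 (s n) x) (G0 (s n) w)) (at z) h) \<longlonglongrightarrow> frechet_derivative g (at z) h"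
    then show thesis by (rule that)
  qed
  have pin: "\<And>k z. z \<in> D \<Longrightarrow> norm (G0 k z) < 1" using G0(1) into_g by simp
  have gy: "norm (g y) < 1" using into_g[OF sg(2) xD(2)] by simp
  have eq: "poincare_dist (G0 k x) (G0 k y) = artanh (norm (Mb (G0 k x) (G0 k y)))" for k
    using pd_Mb_inv[OF pin[OF xD(1)], of k "G0 k y"] by (simp add: Mb_zero pd0)
  have gy2: "-1 < norm (g y)" using norm_ge_zero[of "g y"] by linarith
  have lim: "(\<lambda>n. norm (Mb (G0 (s n) x) (G0 (s n) y))) \<longlonglongrightarrow> norm (g y)"
    by (intro tendsto_intros sg(4) xD(2))
  have "(\<lambda>n. artanh (norm (Mb (G0 (s n) x) (G0 (s n) y)))) \<longlonglongrightarrow> artanh (norm (g y))"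
    by (rule tendsto_artanh[OF lim gy2 gy])
  then have "d \<le> artanh (norm (g y))"
    by (rule seq_lower[OF sg(1)]) (use G0(2) eq in simp)
  then have ge: "poincare_dist a b \<le> poincare_dist ((g \<circ> \<psi>) a) ((g \<circ> \<psi>) b)"
    using sg(3) ab by (simp add: d_def pd0)
  have gV: "holo_V_to_disc \<psi> g" by (rule D_to_V[OF sg(2)])
  interpret sp "g \<circ> \<psi>" b using V_sp[OF gV] ab(2) by simp
  have "\<exists>h. h holomorphic_on ball 0 1 \<and> h ` ball 0 1 \<subseteq> ball 0 1 \<and> (\<forall>\<zeta>\<in>ball 0 1. h ((g \<circ> \<psi>) \<zeta>) = \<zeta>)"
    by (rule dist_rigid) (use ab anb ge in auto)
  then show ?thesis using fin_X[OF sg(2)] by blast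
qed

lemma vi_X:
  assumes "\<exists>x\<in>V. \<exists>v\<in>tangent_V \<psi> x. v \<noteq> 0 \<and> cara_metric_D D x v = cara_metric_V \<psi> x v"
  shows XX
proof -
  obtain x v where xv: "x \<in> V" "v \<in> tangent_V \<psi> x" "v \<noteq> 0" "cara_metric_D D x v = cara_metric_V \<psi> x v"
    using assms by blast
  obtain \<zeta>0 where z0: "\<zeta>0 \<in> ball 0 1" "x = \<psi> \<zeta>0" using V_ex xv(1) by blast
  obtain c where c: "v = c *s disc_map_deriv \<psi> \<zeta>0" using tangent_char xv(2) z0 by blast
  have cnz: "c \<noteq> 0" using xv(3) c by auto
  define e where "e = cmod c / (1 - (cmod \<zeta>0)^2)"
  have ce: "cara_metric_D D x v = e" using xv(4) EV_eq[OF z0(1)] c z0 by (simp add: e_def)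
  define SE where "SE = {poincare_metric (g x) (frechet_derivative g (at x) v) |g. holo_D_to_disc D g}"
  have SEne: "SE \<noteq> {}" using const_D by (auto simp: SE_def)
  have SEb: "bdd_above SE" using bdd_ED[OF z0(1), of c] z0 c unfolding SE_def
    by (intro bdd_aboveI[where M="cmod c / (1 - (cmod \<zeta>0)^2)"]) blast
  have "\<exists>g. holo_D_to_disc D g \<and> e + - inverse (real (Suc k)) < poincare_metric (g x) (frechet_derivative g (at x) v)" for k
  proof -
    have "e + - inverse (real (Suc k)) < Sup SE" using ce by (simp add: SE_def cara_metric_D_def)
    then obtain r where "r \<in> SE" "e + - inverse (real (Suc k)) < r" using less_cSup_iff[OF SEne SEb] by blast
    then show ?thesis unfolding SE_def by blast
  qed
  then obtain G0 where G0: "\<And>k. holo_D_to_disc D (G0 k)"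
    "\<And>k. e + - inverse (real (Suc k)) < poincare_metric (G0 k x) (frechet_derivative (G0 k) (at x) v)" by metis
  have xD: "x \<in> D" using xv VD by auto
  obtain s g where sg: "strict_mono s" "holo_D_to_disc D g" "g x = 0"
    "\<And>z. z \<in> D \<Longrightarrow> (\<lambda>n. Mb (G0 (s n) x) (G0 (s n) z)) \<longlonglongrightarrow> g z"
    "\<And>z h. z \<in> D \<Longrightarrow> (\<lambda>n. frechet_derivative (\<lambda>w. Mb (G0 (s n) x) (G0 (s n) w)) (at z) h) \<longlonglongrightarrow> frechet_derivative g (at z) h"
  proof (rule normal_limit[of G0 x, OF G0(1) xD])
    fix s g assume "strict_mono s" "holo_D_to_disc D g" "g x = 0"
      "\<And>z. z \<in> D \<Longrightarrow> (\<lambda>n. Mb (G0 (s n) x) (G0 (s n) z)) \<longlonglongrightarrow> g z"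
      "\<And>z h. z \<in> D \<Longrightarrow> (\<lambda>n. frechet_derivative (\<lambda>w. Mb (G0 (s n) x) (G0 (s n) w)) (at z) h) \<longlonglongrightarrow> frechet_derivative g (at z) h"
    then show thesis by (rule that)
  qed
  have pin: "\<And>k z. z \<in> D \<Longrightarrow> norm (G0 k z) < 1" using G0(1) into_g by simp
  have fr: "frechet_derivative (\<lambda>w. Mb (G0 k x) (G0 k w)) (at x) v = deriv (Mb (G0 k x)) (G0 k x) * frechet_derivative (G0 k) (at x) v" for k
  proof -
    have "frechet_derivative (Mb (G0 k x) \<circ> G0 k) (at x) v = deriv (Mb (G0 k x)) (G0 k x) * frechet_derivative (G0 k) (at x) v"
      by (rule holo_fun_comp_frechet[OF _ _ open_ball Mb_hol[OF pin[OF xD]] xD])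
         (use G0(1) in \<open>auto simp: holo_D_to_disc_def\<close>)
    then show ?thesis by (simp add: o_def)
  qed
  have eq: "poincare_metric (G0 k x) (frechet_derivative (G0 k) (at x) v) = norm (frechet_derivative (\<lambda>w. Mb (G0 k x) (G0 k w)) (at x) v)" for k
    using pm_Mb_inv[OF pin[OF xD], of k "frechet_derivative (G0 k) (at x) v"] fr[of k]
    by (simp add: Mb_zero poincare_metric_def)
  have "(\<lambda>n. norm (frechet_derivative (\<lambda>w. Mb (G0 (s n) x) (G0 (s n) w)) (at x) v)) \<longlonglongrightarrow> norm (frechet_derivative g (at x) v)"
    by (intro tendsto_intros sg(5) xD)
  then have le: "e \<le> norm (frechet_derivative g (at x) v)"
    by (rule seq_lower[OF sg(1)]) (use G0(2) eq in simp)
  have hf: "holo_fun D g" using sg(2) unfolding holo_D_to_disc_def by blast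
  have "frechet_derivative g (at x) v = c * deriv (g \<circ> \<psi>) \<zeta>0" using frechet_psi[OF hf z0(1)] c z0 by simp
  then have "cmod c / (1 - (cmod \<zeta>0)^2) \<le> cmod c * norm (deriv (g \<circ> \<psi>) \<zeta>0)" using le by (simp add: e_def norm_mult)
  then have "cmod c * (1 / (1 - (cmod \<zeta>0)^2)) \<le> cmod c * norm (deriv (g \<circ> \<psi>) \<zeta>0)" by simp
  moreover have "0 < cmod c" using cnz by simp
  ultimately have "1 / (1 - (cmod \<zeta>0)^2) \<le> norm (deriv (g \<circ> \<psi>) \<zeta>0)"
    by (rule mult_left_le_imp_le)
  then have ge: "1 / (1 - (cmod \<zeta>0)^2) \<le> poincare_metric ((g \<circ> \<psi>) \<zeta>0) (deriv (g \<circ> \<psi>) \<zeta>0)"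
    using sg(3) z0 by (simp add: poincare_metric_def)
  have gV: "holo_V_to_disc \<psi> g" by (rule D_to_V[OF sg(2)])
  interpret sp "g \<circ> \<psi>" \<zeta>0 using V_sp[OF gV] z0(1) by simp
  have "\<exists>h. h holomorphic_on ball 0 1 \<and> h ` ball 0 1 \<subseteq> ball 0 1 \<and> (\<forall>\<zeta>\<in>ball 0 1. h ((g \<circ> \<psi>) \<zeta>) = \<zeta>)"
    by (rule metric_rigid[OF ge])
  then show ?thesis using fin_X[OF sg(2)] by blast
qed

theorem main:
  shows "((\<exists>\<rho>. holo_retraction D \<rho> \<and> \<rho> ` D = V) \<longleftrightarrow>
          (\<exists>\<phi>. complex_geodesic D \<phi> \<and> \<phi> ` ball 0 1 = V)) \<and>
         ((\<exists>\<phi>. complex_geodesic D \<phi> \<and> \<phi> ` ball 0 1 = V) \<longleftrightarrow>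
          (\<forall>x\<in>V. \<forall>y\<in>V. cara_dist_D D x y = cara_dist_V \<psi> x y)) \<and>
         ((\<forall>x\<in>V. \<forall>y\<in>V. cara_dist_D D x y = cara_dist_V \<psi> x y) \<longleftrightarrow>
          (\<exists>x\<in>V. \<exists>y\<in>V. x \<noteq> y \<and> cara_dist_D D x y = cara_dist_V \<psi> x y)) \<and>
         ((\<exists>x\<in>V. \<exists>y\<in>V. x \<noteq> y \<and> cara_dist_D D x y = cara_dist_V \<psi> x y) \<longleftrightarrow>
          (\<forall>x\<in>V. \<forall>v\<in>tangent_V \<psi> x. cara_metric_D D x v = cara_metric_V \<psi> x v)) \<and>
         ((\<forall>x\<in>V. \<forall>v\<in>tangent_V \<psi> x. cara_metric_D D x v = cara_metric_V \<psi> x v) \<longleftrightarrow>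
          (\<exists>x\<in>V. \<exists>v\<in>tangent_V \<psi> x. v \<noteq> 0 \<and> cara_metric_D D x v = cara_metric_V \<psi> x v))"
proof -
  have 1: "(\<exists>\<rho>. holo_retraction D \<rho> \<and> \<rho> ` D = V) \<longleftrightarrow> XX" using X_i i_X by blast
  have 3: "(\<forall>x\<in>V. \<forall>y\<in>V. cara_dist_D D x y = cara_dist_V \<psi> x y) \<longleftrightarrow> XX"
    using X_iii iii_iv iv_X by blast
  have 2: "(\<exists>\<phi>. complex_geodesic D \<phi> \<and> \<phi> ` ball 0 1 = V) \<longleftrightarrow> XX"
    using 3 iii_ii ii_iii by blast
  have 4: "(\<exists>x\<in>V. \<exists>y\<in>V. x \<noteq> y \<and> cara_dist_D D x y = cara_dist_V \<psi> x y) \<longleftrightarrow> XX"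
    using 3 iii_iv iv_X by blast
  have 5: "(\<forall>x\<in>V. \<forall>v\<in>tangent_V \<psi> x. cara_metric_D D x v = cara_metric_V \<psi> x v) \<longleftrightarrow> XX"
    using X_v v_vi vi_X by blast
  have 6: "(\<exists>x\<in>V. \<exists>v\<in>tangent_V \<psi> x. v \<noteq> 0 \<and> cara_metric_D D x v = cara_metric_V \<psi> x v) \<longleftrightarrow> XX"
    using 5 v_vi vi_X by blast
  show ?thesis unfolding 1 2 3 4 5 6 by simp
qed

end

theorem theorem14p2:
  fixes D V :: "(complex^'n) set" and \<psi> :: "complex \<Rightarrow> complex^'n"
  assumes "bounded_domain D" and "disc_submanifold D V \<psi>"
  shows "((\<exists>\<rho>. holo_retraction D \<rho> \<and> \<rho> ` D = V) \<longleftrightarrow>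
          (\<exists>\<phi>. complex_geodesic D \<phi> \<and> \<phi> ` ball 0 1 = V)) \<and>
         ((\<exists>\<phi>. complex_geodesic D \<phi> \<and> \<phi> ` ball 0 1 = V) \<longleftrightarrow>
          (\<forall>x\<in>V. \<forall>y\<in>V. cara_dist_D D x y = cara_dist_V \<psi> x y)) \<and>
         ((\<forall>x\<in>V. \<forall>y\<in>V. cara_dist_D D x y = cara_dist_V \<psi> x y) \<longleftrightarrow>
          (\<exists>x\<in>V. \<exists>y\<in>V. x \<noteq> y \<and> cara_dist_D D x y = cara_dist_V \<psi> x y)) \<and>
         ((\<exists>x\<in>V. \<exists>y\<in>V. x \<noteq> y \<and> cara_dist_D D x y = cara_dist_V \<psi> x y) \<longleftrightarrow>
          (\<forall>x\<in>V. \<forall>v\<in>tangent_V \<psi> x. cara_metric_D D x v = cara_metric_V \<psi> x v)) \<and>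
         ((\<forall>x\<in>V. \<forall>v\<in>tangent_V \<psi> x. cara_metric_D D x v = cara_metric_V \<psi> x v) \<longleftrightarrow>
          (\<exists>x\<in>V. \<exists>v\<in>tangent_V \<psi> x. v \<noteq> 0 \<and> cara_metric_D D x v = cara_metric_V \<psi> x v))"
proof -
  interpret dsm D V \<psi> using assms by (simp add: dsm_def)
  show ?thesis by (rule main)
qed


end
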